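(* For every interval forecast $I\subseteq(0,1)$ with rational endpoints, there is a recursive enumeration of all test supermartingales for $I$ generated by lower semicomputable non-negative real supermartingale multipliers for $I$: there is a recursive map $q:\mathbb N_0\times\mathbb S\times\mathbb N_0\to\mathbb Q$, non-decreasing in its last argument, such that each $T_i(s)=\lim_{n\to\infty}q(i,s,n)$ equals $D_i^{\circledcirc}$ for some lower semicomputable non-negative real supermartingale multiplier $D_i$ for $I$ (so each $T_i$ is a lower semicomputable test supermartingale for $I$), and for every lower semicomputable non-negative real supermartingale multiplier $D$ for $I$ there is an $i$ with $D^{\circledcirc}=T_i$.
   Context: $\mathcal X=\{0,1\}$, $\mathbb S=\bigcup_{n\ge0}\mathcal X^n$ (finite binary strings), $\square$ the empty string. Interval forecasts are nonempty closed intervals $I\subseteq[0,1]$; $\overline E_I(f)=\max_{p\in I}[pf(1)+(1-p)f(0)]$. A real multiplier process $D$ maps $\mathbb S$ to gambles $\mathcal X\to\mathbb R$; it is a supermartingale multiplier for $I$ if $\overline E_I(D(s))\le1$ for all $s$; lower semicomputable if there is a recursive $r:\mathbb S\times\mathcal X\times\mathbb N_0\to\mathbb Q$ non-decreasing in the last argument with $D(s)(x)=\lim_nr(s,x,n)$. It generates $D^{\circledcirc}(x_1,\dots,x_n)=\prod_{k=0}^{n-1}D(x_{1:k})(x_{k+1})$ (with $D^{\circledcirc}(\square)=1$). A test supermartingale for $I$ is $T:\mathbb S\to\mathbb R_{\ge0}$ with $T(\square)=1$ and $\overline E_I(T(s\,\cdot)-T(s))\le0$ for all $s$; it is lower semicomputable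 if it is the limit of a recursive rational sequence non-decreasing in the approximation index. *)

theory Defs
  imports "HOL-Analysis.Analysis"
begin

datatype recf = Zero | Succ | Proj nat | Comp recf "recf list" | Prec recf recf | Mini recf

inductive eval :: "recf \<Rightarrow> nat list \<Rightarrow> nat \<Rightarrow> bool" where
  eval_Zero: "eval Zero xs 0"
| eval_Succ: "eval Succ (x # xs) (Suc x)"
| eval_Proj: "i < length xs \<Longrightarrow> eval (Proj i) xs (xs ! i)"
| eval_Comp: "list_all2 (\<lambda>g y. eval g xs y) gs ys \<Longrightarrow> eval f ys z \<Longrightarrow> eval (Comp f gs) xs z"
| eval_Prec0: "eval f xs y \<Longrightarrow> eval (Prec f g) (0 # xs) y"
| eval_PrecS: "eval (Prec f g) (n # xs) y \<Longrightarrow> eval g (n # y # xs) z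
               \<Longrightarrow> eval (Prec f g) (Suc n # xs) z"
| eval_Mini: "eval f (n # xs) 0 \<Longrightarrow> (\<forall>m<n. \<exists>y. eval f (m # xs) y \<and> 0 < y)
               \<Longrightarrow> eval (Mini f) xs n"

definition recursive_nat :: "nat \<Rightarrow> (nat list \<Rightarrow> nat) \<Rightarrow> bool" where
  "recursive_nat k f \<longleftrightarrow> (\<exists>c. \<forall>xs. length xs = k \<longrightarrow> eval c xs (f xs))"

definition recursive_rat :: "nat \<Rightarrow> (nat list \<Rightarrow> rat) \<Rightarrow> bool" where
  "recursive_rat k f \<longleftrightarrow> (\<exists>u v w. recursive_nat k u \<and> recursive_nat k v \<and> recursive_nat k w \<and>
     (\<forall>xs. length xs = k \<longrightarrow> f xs = (of_nat (u xs) - of_nat (v xs)) / of_nat (w xs + 1)))"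

text \<open>Standard bijective coding of finite binary strings (True = 1, False = 0) by naturals
  (bijective base-2 numeration, the first symbol being least significant).\<close>
fun str_code :: "bool list \<Rightarrow> nat" where
  "str_code [] = 0"
| "str_code (x # s) = 2 * str_code s + (if x then 2 else 1)"

text \<open>Outcome space X = {0,1} is modelled by bool (True = 1); finite strings by bool list,
  where s ! k is the (k+1)-st symbol and take k s = x_{1:k}.\<close>

definition upper_exp :: "real set \<Rightarrow> (bool \<Rightarrow> real) \<Rightarrow> real" where
  "upper_exp I f = (SUP p\<in>I. p * f True + (1 - p) * f False)"

definition supermartingale_multiplier :: "real set \<Rightarrow> (bool list \<Rightarrow> bool \<Rightarrow> real) \<Rightarrow> bool" where
  "supermartingale_multiplier I D \<longleftrightarrow> (\<forall>s. upper_exp I (D s) \<le> 1)"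

definition nonneg_multiplier :: "(bool list \<Rightarrow> bool \<Rightarrow> real) \<Rightarrow> bool" where
  "nonneg_multiplier D \<longleftrightarrow> (\<forall>s x. 0 \<le> D s x)"

definition lower_semicomputable_multiplier :: "(bool list \<Rightarrow> bool \<Rightarrow> real) \<Rightarrow> bool" where
  "lower_semicomputable_multiplier D \<longleftrightarrow>
     (\<exists>r :: bool list \<Rightarrow> bool \<Rightarrow> nat \<Rightarrow> rat.
        (\<exists>g. recursive_rat 3 g \<and> (\<forall>s x n. r s x n = g [str_code s, of_bool x, n])) \<and>
        (\<forall>s x. mono (r s x)) \<and>
        (\<forall>s x. (\<lambda>n. real_of_rat (r s x n)) \<longlonglongrightarrow> D s x))"

definition generated :: "(bool list \<Rightarrow> bool \<Rightarrow> real) \<Rightarrow> bool list \<Rightarrow> real" where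
  "generated D s = (\<Prod>k<length s. D (take k s) (s ! k))"

definition test_supermartingale :: "real set \<Rightarrow> (bool list \<Rightarrow> real) \<Rightarrow> bool" where
  "test_supermartingale I T \<longleftrightarrow> T [] = 1 \<and> (\<forall>s. 0 \<le> T s) \<and>
     (\<forall>s. upper_exp I (\<lambda>x. T (s @ [x]) - T s) \<le> 0)"

end

theory Submission
  imports Defs "HOL-Library.Nat_Bijection"
begin


abbreviation R :: "nat \<Rightarrow> (nat list \<Rightarrow> nat) \<Rightarrow> bool" where
  "R k f \<equiv> recursive_nat k f"

definition rp :: "nat \<Rightarrow> (nat list \<Rightarrow> bool) \<Rightarrow> bool" where
  "rp k P \<longleftrightarrow> R k (\<lambda>xs. if P xs then 1 else 0)"

lemma R_cong: "R k f \<Longrightarrow> (\<And>xs. length xs = k \<Longrightarrow> f xs = g xs) \<Longrightarrow> R k g"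
  unfolding recursive_nat_def by metis

lemma rp_cong: "rp k P \<Longrightarrow> (\<And>xs. length xs = k \<Longrightarrow> P xs = Q xs) \<Longrightarrow> rp k Q"
  unfolding rp_def by (erule R_cong) simp

lemma R_zero: "R k (\<lambda>_. 0)"
  unfolding recursive_nat_def by (auto intro: eval_Zero)

lemma R_proj: "i < k \<Longrightarrow> R k (\<lambda>xs. xs ! i)"
  unfolding recursive_nat_def by (auto intro: eval_Proj)

lemma R_succ1: "R 1 (\<lambda>xs. Suc (xs ! 0))"
  unfolding recursive_nat_def
proof (intro exI allI impI)
  fix xs :: "nat list" assume "length xs = 1"
  then obtain x where "xs = [x]" by (cases xs) auto
  then show "eval Succ xs (Suc (xs ! 0))" by (auto intro: eval_Succ)
qed

lemma list_choice: "(\<forall>g\<in>set gs. \<exists>c. P g c) \<Longrightarrow> \<exists>cs. list_all2 P gs cs"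
proof (induction gs)
  case Nil then show ?case by auto
next
  case (Cons g gs)
  then obtain c cs where "P g c" "list_all2 P gs cs" by auto
  then show ?case by (intro exI[of _ "c # cs"]) auto
qed

lemma R_comp:
  assumes h: "R m h" and len: "length gs = m" and gs: "\<forall>g\<in>set gs. R k g"
  shows "R k (\<lambda>xs. h (map (\<lambda>g. g xs) gs))"
proof -
  obtain ch where ch: "\<forall>xs. length xs = m \<longrightarrow> eval ch xs (h xs)"
    using h unfolding recursive_nat_def by auto
  obtain cs where cs: "list_all2 (\<lambda>g c. \<forall>xs. length xs = k \<longrightarrow> eval c xs (g xs)) gs cs"
    using list_choice[of gs "\<lambda>g c. \<forall>xs. length xs = k \<longrightarrow> eval c xs (g xs)"] gs
    unfolding recursive_nat_def by auto
  show ?thesis unfolding recursive_nat_def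
  proof (intro exI allI impI)
    fix xs :: "nat list" assume xs: "length xs = k"
    have "list_all2 (\<lambda>c y. eval c xs y) cs (map (\<lambda>g. g xs) gs)"
      using cs xs by (auto simp: list_all2_conv_all_nth)
    moreover have "eval ch (map (\<lambda>g. g xs) gs) (h (map (\<lambda>g. g xs) gs))"
      using ch len by auto
    ultimately show "eval (Comp ch cs) xs (h (map (\<lambda>g. g xs) gs))"
      by (rule eval_Comp)
  qed
qed

lemma R_F1: "R 1 (\<lambda>ys. F (ys ! 0)) \<Longrightarrow> R k f \<Longrightarrow> R k (\<lambda>xs. F (f xs))"
  using R_comp[of 1 "\<lambda>ys. F (ys ! 0)" "[f]" k] by simp

lemma R_F2: "R 2 (\<lambda>ys. F (ys ! 0) (ys ! 1)) \<Longrightarrow> R k f \<Longrightarrow> R k g \<Longrightarrow> R k (\<lambda>xs. F (f xs) (g xs))"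
  using R_comp[of 2 "\<lambda>ys. F (ys ! 0) (ys ! 1)" "[f, g]" k] by simp

lemma R_F3: "R 3 (\<lambda>ys. F (ys ! 0) (ys ! 1) (ys ! 2)) \<Longrightarrow> R k f \<Longrightarrow> R k g \<Longrightarrow> R k h \<Longrightarrow>
   R k (\<lambda>xs. F (f xs) (g xs) (h xs))"
  using R_comp[of 3 "\<lambda>ys. F (ys ! 0) (ys ! 1) (ys ! 2)" "[f, g, h]" k] by simp

lemma R_F4: "R 4 (\<lambda>ys. F (ys ! 0) (ys ! 1) (ys ! 2) (ys ! 3)) \<Longrightarrow> R k f \<Longrightarrow> R k g \<Longrightarrow> R k h \<Longrightarrow> R k l \<Longrightarrow>
   R k (\<lambda>xs. F (f xs) (g xs) (h xs) (l xs))"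
  using R_comp[of 4 "\<lambda>ys. F (ys ! 0) (ys ! 1) (ys ! 2) (ys ! 3)" "[f, g, h, l]" k] by simp

lemma R_F5: "R 5 (\<lambda>ys. F (ys ! 0) (ys ! 1) (ys ! 2) (ys ! 3) (ys ! 4)) \<Longrightarrow> R k f \<Longrightarrow> R k g \<Longrightarrow> R k h \<Longrightarrow> R k l \<Longrightarrow> R k m \<Longrightarrow>
   R k (\<lambda>xs. F (f xs) (g xs) (h xs) (l xs) (m xs))"
  using R_comp[of 5 "\<lambda>ys. F (ys ! 0) (ys ! 1) (ys ! 2) (ys ! 3) (ys ! 4)" "[f, g, h, l, m]" k] by simp

lemma R_Suc: "R k f \<Longrightarrow> R k (\<lambda>xs. Suc (f xs))"
  by (rule R_F1[OF R_succ1])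

lemma R_const: "R k (\<lambda>_. c)"
proof (induction c)
  case 0 then show ?case by (rule R_zero)
next
  case (Suc c) then show ?case by (rule R_Suc)
qed

lemma R_reindex:
  assumes "R m h" "length is = m" "\<forall>i\<in>set is. i < k"
  shows "R k (\<lambda>xs. h (map (\<lambda>i. xs ! i) is))"
proof -
  have "R k (\<lambda>xs. h (map (\<lambda>g. g xs) (map (\<lambda>i xs. xs ! i) is)))"
    by (rule R_comp) (use assms R_proj in auto)
  then show ?thesis by (simp add: comp_def)
qed

fun pr :: "(nat list \<Rightarrow> nat) \<Rightarrow> (nat list \<Rightarrow> nat) \<Rightarrow> nat \<Rightarrow> nat list \<Rightarrow> nat" where
  "pr f g 0 xs = f xs"
| "pr f g (Suc n) xs = g (n # pr f g n xs # xs)"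

lemma R_prec:
  assumes "R k f" "R (Suc (Suc k)) g"
  shows "R (Suc k) (\<lambda>ys. pr f g (hd ys) (tl ys))"
proof -
  obtain cf where cf: "\<forall>xs. length xs = k \<longrightarrow> eval cf xs (f xs)"
    using assms(1) unfolding recursive_nat_def by auto
  obtain cg where cg: "\<forall>xs. length xs = Suc (Suc k) \<longrightarrow> eval cg xs (g xs)"
    using assms(2) unfolding recursive_nat_def by auto
  have *: "length xs = k \<Longrightarrow> eval (Prec cf cg) (n # xs) (pr f g n xs)" for n xs
  proof (induction n)
    case 0 then show ?case using cf by (auto intro: eval_Prec0)
  next
    case (Suc n) then show ?case using cg by (auto intro: eval_PrecS)
  qed
  show ?thesis unfolding recursive_nat_def
  proof (intro exI allI impI)
    fix ys :: "nat list" assume "length ys = Suc k"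
    then obtain n xs where "ys = n # xs" "length xs = k" by (cases ys) auto
    then show "eval (Prec cf cg) ys (pr f g (hd ys) (tl ys))" using * by simp
  qed
qed

lemma R_prec':
  "R k f \<Longrightarrow> R (Suc (Suc k)) g \<Longrightarrow> k' = Suc k \<Longrightarrow> R k' (\<lambda>ys. pr f g (hd ys) (tl ys))"
  using R_prec by blast

lemma R_cons:
  assumes "R (Suc k) h" "R k N"
  shows "R k (\<lambda>xs. h (N xs # xs))"
proof -
  have "R k (\<lambda>xs. h (map (\<lambda>g. g xs) (N # map (\<lambda>i xs. xs ! i) [0..<k])))"
    by (rule R_comp) (use assms R_proj in auto)
  then show ?thesis
    by (rule R_cong) (simp add: comp_def, metis map_nth)
qed

lemma R_add2: "R 2 (\<lambda>ys. ys ! 0 + ys ! 1)"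
proof -
  have r: "R 2 (\<lambda>ys. pr (\<lambda>xs. xs ! 0) (\<lambda>zs. Suc (zs ! 1)) (hd ys) (tl ys))"
    by (rule R_prec'[where k=1])  (auto intro: R_proj R_Suc)
  have e: "pr (\<lambda>xs. xs ! 0) (\<lambda>zs. Suc (zs ! 1)) n xs = n + xs ! 0" for n xs
    by (induction n) auto
  show ?thesis using r
    by (rule R_cong) (simp only: e, auto simp: length_Suc_conv numeral_2_eq_2)
qed

lemma R_add: "R k f \<Longrightarrow> R k g \<Longrightarrow> R k (\<lambda>xs. f xs + g xs)"
  by (rule R_F2[OF R_add2])

lemma R_mult2: "R 2 (\<lambda>ys. ys ! 0 * ys ! 1)"
proof -
  have r: "R 2 (\<lambda>ys. pr (\<lambda>xs. 0) (\<lambda>zs. zs ! 1 + zs ! 2) (hd ys) (tl ys))"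
    by (rule R_prec'[where k=1])  (auto intro!: R_add R_proj R_const)
  have e: "pr (\<lambda>xs. 0) (\<lambda>zs. zs ! 1 + zs ! 2) n xs = n * xs ! 0" for n xs
    by (induction n) auto
  show ?thesis using r
    by (rule R_cong) (simp only: e, auto simp: length_Suc_conv numeral_2_eq_2)
qed

lemma R_mult: "R k f \<Longrightarrow> R k g \<Longrightarrow> R k (\<lambda>xs. f xs * g xs)"
  by (rule R_F2[OF R_mult2])

lemma R_pred1: "R 1 (\<lambda>ys. ys ! 0 - 1)"
proof -
  have r: "R 1 (\<lambda>ys. pr (\<lambda>xs. 0) (\<lambda>zs. zs ! 0) (hd ys) (tl ys))"
    by (rule R_prec'[where k=0])  (auto intro!: R_proj R_const)
  have e: "pr (\<lambda>xs. 0) (\<lambda>zs. zs ! 0) n xs = n - 1" for n xs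
    by (induction n) auto
  show ?thesis using r
    by (rule R_cong) (simp only: e, auto simp: length_Suc_conv numeral_2_eq_2)
qed

lemma R_subr2: "R 2 (\<lambda>ys. ys ! 1 - ys ! 0)"
proof -
  have g: "R 3 (\<lambda>zs. zs ! 1 - 1)"
    by (rule R_F1[OF R_pred1 R_proj]) simp
  have r: "R 2 (\<lambda>ys. pr (\<lambda>xs. xs ! 0) (\<lambda>zs. zs ! 1 - 1) (hd ys) (tl ys))"
    by (rule R_prec'[where k=1])  (use g R_proj in \<open>auto simp: numeral_3_eq_3\<close>)
  have e: "pr (\<lambda>xs. xs ! 0) (\<lambda>zs. zs ! 1 - 1) n xs = xs ! 0 - n" for n xs
    by (induction n) auto
  show ?thesis using r
    by (rule R_cong) (simp only: e, auto simp: length_Suc_conv numeral_2_eq_2)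
qed

lemma R_sub: "R k f \<Longrightarrow> R k g \<Longrightarrow> R k (\<lambda>xs. f xs - g xs)"
  by (rule R_F2[where F="\<lambda>a b. b - a", OF R_subr2])

lemma R_pow2_1: "R 1 (\<lambda>ys. 2 ^ (ys ! 0))"
proof -
  have r: "R 1 (\<lambda>ys. pr (\<lambda>xs. 1) (\<lambda>zs. 2 * zs ! 1) (hd ys) (tl ys))"
    by (rule R_prec'[where k=0])  (auto intro!: R_proj R_const R_mult)
  have e: "pr (\<lambda>xs. 1) (\<lambda>zs. 2 * zs ! 1) n xs = 2 ^ n" for n xs
    by (induction n) auto
  show ?thesis using r
    by (rule R_cong) (simp only: e, auto simp: length_Suc_conv numeral_2_eq_2)
qed

lemma R_pow2: "R k f \<Longrightarrow> R k (\<lambda>xs. 2 ^ f xs)"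
  by (rule R_F1[OF R_pow2_1])


lemma reindex_drop2:
  assumes F: "R (Suc k) (\<lambda>ys. F (ys ! k) (take k ys))"
  shows "R (Suc (Suc k)) (\<lambda>zs. F (zs ! 0) (drop 2 zs))"
proof -
  have "R (Suc (Suc k)) (\<lambda>zs. (\<lambda>ys. F (ys ! k) (take k ys)) (map (\<lambda>i. zs ! i) (map (\<lambda>i. i + 2) [0..<k] @ [0])))"
    by (rule R_reindex[OF F]) auto
  then show ?thesis
  proof (rule R_cong)
    fix zs :: "nat list" assume l: "length zs = Suc (Suc k)"
    have m: "map (\<lambda>i. zs ! i) (map (\<lambda>i. i + 2) [0..<k]) = drop 2 zs"
      using l by (intro nth_equalityI) auto
    have "map (\<lambda>i. zs ! i) (map (\<lambda>i. i + 2) [0..<k] @ [0]) = drop 2 zs @ [zs ! 0]"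
      by (simp only: map_append m) simp
    then show "(\<lambda>ys. F (ys ! k) (take k ys)) (map (\<lambda>i. zs ! i) (map (\<lambda>i. i + 2) [0..<k] @ [0])) = F (zs ! 0) (drop 2 zs)"
      using l by (simp add: nth_append)
  qed
qed

lemma R_sum:
  assumes F: "R (Suc k) (\<lambda>ys. F (ys ! k) (take k ys))" and N: "R k N"
  shows "R k (\<lambda>xs. \<Sum>j<N xs. F j xs)"
proof -
  note G = reindex_drop2[OF F]
  have g: "R (Suc (Suc k)) (\<lambda>zs. zs ! 1 + F (zs ! 0) (drop 2 zs))"
    by (rule R_add[OF R_proj G]) simp
  have e: "pr (\<lambda>_. 0) (\<lambda>zs. zs ! 1 + F (zs ! 0) (drop 2 zs)) n xs = (\<Sum>j<n. F j xs)" for n xs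
    by (induction n) auto
  have "R (Suc k) (\<lambda>ys. pr (\<lambda>_. 0) (\<lambda>zs. zs ! 1 + F (zs ! 0) (drop 2 zs)) (hd ys) (tl ys))"
    by (rule R_prec[OF R_const g])
  from R_cons[OF this N] show ?thesis by (simp only: e list.sel)
qed

lemma R_prod:
  assumes F: "R (Suc k) (\<lambda>ys. F (ys ! k) (take k ys))" and N: "R k N"
  shows "R k (\<lambda>xs. \<Prod>j<N xs. F j xs)"
proof -
  note G = reindex_drop2[OF F]
  have g: "R (Suc (Suc k)) (\<lambda>zs. zs ! 1 * F (zs ! 0) (drop 2 zs))"
    by (rule R_mult[OF R_proj G]) simp
  have e: "pr (\<lambda>_. 1) (\<lambda>zs. zs ! 1 * F (zs ! 0) (drop 2 zs)) n xs = (\<Prod>j<n. F j xs)" for n xs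
    by (induction n) auto
  have "R (Suc k) (\<lambda>ys. pr (\<lambda>_. 1) (\<lambda>zs. zs ! 1 * F (zs ! 0) (drop 2 zs)) (hd ys) (tl ys))"
    by (rule R_prec[OF R_const g])
  from R_cons[OF this N] show ?thesis by (simp only: e list.sel)
qed

lemma rp_pos: assumes "R k f" "\<And>xs. length xs = k \<Longrightarrow> P xs \<longleftrightarrow> 0 < f xs" shows "rp k P"
proof -
  have "R k (\<lambda>xs. 1 - (1 - f xs))" by (intro R_sub R_const assms)
  then show ?thesis unfolding rp_def by (rule R_cong) (use assms(2) in auto)
qed

lemma rp_R: "rp k P \<Longrightarrow> R k (\<lambda>xs. if P xs then 1 else 0)"
  unfolding rp_def .

lemma rp_le: assumes "R k f" "R k g" shows "rp k (\<lambda>xs. f xs \<le> g xs)"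
proof -
  have "R k (\<lambda>xs. 1 - (f xs - g xs))" by (intro R_sub R_const assms)
  then show ?thesis unfolding rp_def by (rule R_cong) auto
qed

lemma rp_less: assumes "R k f" "R k g" shows "rp k (\<lambda>xs. f xs < g xs)"
  by (rule rp_pos[OF R_sub[OF assms(2) assms(1)]]) auto

lemma rp_eq: assumes "R k f" "R k g" shows "rp k (\<lambda>xs. f xs = g xs)"
proof -
  have "R k (\<lambda>xs. 1 - ((f xs - g xs) + (g xs - f xs)))" by (intro R_sub R_add R_const assms)
  then show ?thesis unfolding rp_def by (rule R_cong) auto
qed

lemma rp_and: assumes "rp k P" "rp k Q" shows "rp k (\<lambda>xs. P xs \<and> Q xs)"
proof -
  have "R k (\<lambda>xs. (if P xs then 1 else 0) * (if Q xs then 1 else 0))"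
    by (intro R_mult rp_R assms)
  then show ?thesis unfolding rp_def by (rule R_cong) auto
qed

lemma rp_not: assumes "rp k P" shows "rp k (\<lambda>xs. \<not> P xs)"
proof -
  have "R k (\<lambda>xs. 1 - (if P xs then 1 else 0))"
    by (intro R_sub R_const rp_R assms)
  then show ?thesis unfolding rp_def by (rule R_cong) auto
qed

lemma rp_or: assumes "rp k P" "rp k Q" shows "rp k (\<lambda>xs. P xs \<or> Q xs)"
proof -
  have "R k (\<lambda>xs. (if P xs then 1 else 0) + (if Q xs then 1 else 0))"
    by (intro R_add rp_R assms)
  then show ?thesis by (rule rp_pos) auto
qed

lemma rp_imp: "rp k P \<Longrightarrow> rp k Q \<Longrightarrow> rp k (\<lambda>xs. P xs \<longrightarrow> Q xs)"
  using rp_or[OF rp_not] by simp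

lemma rp_iff: "rp k P \<Longrightarrow> rp k Q \<Longrightarrow> rp k (\<lambda>xs. P xs \<longleftrightarrow> Q xs)"
  using rp_and[OF rp_imp rp_imp] by (simp add: iff_conv_conj_imp)

lemma rp_const: "rp k (\<lambda>_. P)"
  unfolding rp_def by (rule R_const)

lemma R_if: assumes "rp k P" "R k f" "R k g" shows "R k (\<lambda>xs. if P xs then f xs else g xs)"
proof -
  have "R k (\<lambda>xs. (if P xs then 1 else 0) * f xs + (1 - (if P xs then 1 else 0)) * g xs)"
    by (intro R_add R_mult R_sub R_const rp_R assms)
  then show ?thesis by (rule R_cong) auto
qed

lemma rp_ex:
  assumes "rp (Suc k) (\<lambda>ys. P (ys ! k) (take k ys))" "R k N"
  shows "rp k (\<lambda>xs. \<exists>j<N xs. P j xs)"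
proof (rule rp_pos[OF R_sum[OF rp_R[OF assms(1)] assms(2)]])
  fix xs :: "nat list"
  show "(\<exists>j<N xs. P j xs) \<longleftrightarrow> 0 < (\<Sum>j<N xs. if P j xs then 1 else (0::nat))"
  proof -
    have "(\<Sum>j<N xs. if P j xs then 1 else 0) = (0::nat) \<longleftrightarrow> \<not> (\<exists>j<N xs. P j xs)"
      by (auto simp: sum_eq_0_iff)
    then show ?thesis by (metis bot_nat_0.not_eq_extremum)
  qed
qed

lemma rp_all:
  assumes "rp (Suc k) (\<lambda>ys. P (ys ! k) (take k ys))" "R k N"
  shows "rp k (\<lambda>xs. \<forall>j<N xs. P j xs)"
proof -
  have "rp k (\<lambda>xs. \<not> (\<exists>j<N xs. \<not> P j xs))"
    by (intro rp_not rp_ex assms)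
  then show ?thesis by simp
qed

definition bmu :: "nat \<Rightarrow> (nat \<Rightarrow> bool) \<Rightarrow> nat" where
  "bmu n P = (if \<exists>j<n. P j then LEAST j. P j else n)"

lemma bmu_sum: "bmu n P = (\<Sum>k<n. if \<forall>j<Suc k. \<not> P j then 1 else 0)"
proof (induction n)
  case 0 then show ?case by (simp add: bmu_def)
next
  case (Suc n)
  show ?case
  proof (cases "\<exists>j<n. P j")
    case True
    then have "bmu (Suc n) P = bmu n P" by (auto simp: bmu_def)
    then show ?thesis using Suc True by (auto intro: less_SucI)
  next
    case False
    then have b: "bmu n P = n" unfolding bmu_def by auto
    show ?thesis
    proof (cases "P n")
      case True
      then have "bmu (Suc n) P = n" using False unfolding bmu_def
        by (auto intro!: Least_equality) (metis not_le)
      then show ?thesis using Suc b False True by auto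
    next
      case f2: False
      then have "bmu (Suc n) P = Suc n" using False unfolding bmu_def
        using less_Suc_eq by auto
      then show ?thesis using Suc b False f2 less_Suc_eq by auto
    qed
  qed
qed

lemma bmu_props:
  assumes "\<exists>j<n. P j"
  shows "P (bmu n P)" "bmu n P < n" "\<And>j. j < bmu n P \<Longrightarrow> \<not> P j"
proof -
  have b: "bmu n P = (LEAST j. P j)" using assms by (simp add: bmu_def)
  from assms obtain j where j: "j < n" "P j" by auto
  show "P (bmu n P)" unfolding b using j by (rule_tac LeastI) 
  show "bmu n P < n" unfolding b using j by (meson Least_le le_less_trans)
  show "\<And>j. j < bmu n P \<Longrightarrow> \<not> P j" unfolding b using not_less_Least by blast
qed

lemma bmu_none: "\<not> (\<exists>j<n. P j) \<Longrightarrow> bmu n P = n"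
  unfolding bmu_def by auto

lemma bmu_le: "bmu n P \<le> n"
  using bmu_props(2)[of n P] bmu_none[of n P] by fastforce

lemma R_bmu:
  assumes P: "rp (Suc k) (\<lambda>ys. P (ys ! k) (take k ys))" and N: "R k N"
  shows "R k (\<lambda>xs. bmu (N xs) (\<lambda>j. P j xs))"
proof -
  have P2: "rp (Suc (Suc k)) (\<lambda>zs. (\<lambda>ys. \<not> P (ys ! k) (take k ys)) (map (\<lambda>i. zs ! i) ([0..<k] @ [Suc k])))"
    using R_reindex[OF rp_R[OF rp_not[OF P]], of "[0..<k] @ [Suc k]" "Suc (Suc k)"]
    unfolding rp_def by auto
  have P3: "rp (Suc (Suc k)) (\<lambda>zs. \<not> P (zs ! Suc k) (take k (take (Suc k) zs)))"
  proof (rule rp_cong[OF P2])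
    fix zs :: "nat list" assume l: "length zs = Suc (Suc k)"
    have m: "map (\<lambda>i. zs ! i) [0..<k] = take k zs"
      using l by (intro nth_equalityI) auto
    show "(\<lambda>ys. \<not> P (ys ! k) (take k ys)) (map (\<lambda>i. zs ! i) ([0..<k] @ [Suc k])) =
      (\<not> P (zs ! Suc k) (take k (take (Suc k) zs)))"
      using l by (simp add: m nth_append min_def)
  qed
  have A: "rp (Suc k) (\<lambda>ys. \<forall>j<Suc (ys ! k). \<not> P j (take k ys))"
    by (rule rp_all[OF P3 R_Suc[OF R_proj]]) simp
  have "R k (\<lambda>xs. \<Sum>kk<N xs. if \<forall>j<Suc kk. \<not> P j xs then 1 else 0)"
    by (rule R_sum[OF rp_R[OF A] N])
  then show ?thesis by (simp only: bmu_sum)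
qed


lemma R_iter:
  assumes F: "R 1 (\<lambda>ys. F (ys ! 0))" and n: "R k n" and f: "R k f"
  shows "R k (\<lambda>xs. (F ^^ n xs) (f xs))"
proof -
  have g: "R 3 (\<lambda>zs. F (zs ! 1))" by (rule R_F1[OF F R_proj]) simp
  have r: "R 2 (\<lambda>ys. pr (\<lambda>xs. xs ! 0) (\<lambda>zs. F (zs ! 1)) (hd ys) (tl ys))"
    by (rule R_prec'[where k=1]) (use g R_proj in \<open>auto simp: numeral_3_eq_3\<close>)
  have e: "pr (\<lambda>xs. xs ! 0) (\<lambda>zs. F (zs ! 1)) m xs = (F ^^ m) (xs ! 0)" for m xs
    by (induction m) auto
  have "R 2 (\<lambda>ys. (F ^^ (ys ! 0)) (ys ! 1))"
    using r by (rule R_cong) (simp only: e, auto simp: length_Suc_conv numeral_2_eq_2)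
  then show ?thesis by (rule R_F2[OF _ n f])
qed

named_theorems rintro
declare R_const[rintro] R_proj[rintro] R_add[rintro] R_mult[rintro] R_sub[rintro] R_Suc[rintro]
  R_pow2[rintro] R_if[rintro] R_sum[rintro] R_prod[rintro] R_bmu[rintro] rp_eq[rintro] rp_le[rintro]
  rp_less[rintro] rp_and[rintro] rp_or[rintro] rp_not[rintro] rp_imp[rintro] rp_iff[rintro]
  rp_ex[rintro] rp_all[rintro] rp_const[rintro]

lemmas tk = nth_take zero_less_numeral zero_less_one one_less_numeral_iff numeral_less_iff less_num_simps le_num_simps numeral_le_iff
  Suc_numeral add_num_simps zero_less_Suc less_Suc0 numeral_One


lemma triangle_sum: "triangle n = (\<Sum>j<Suc n. j)"
  by (induction n) auto

lemma R_triangle: "R k f \<Longrightarrow> R k (\<lambda>xs. triangle (f xs))"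
proof -
  assume f: "R k f"
  have "R 1 (\<lambda>xs. \<Sum>j<Suc (xs ! 0). j)"
    by (intro rintro | simp_all only: tk)+
  then have "R 1 (\<lambda>xs. triangle (xs ! 0))" by (simp only: triangle_sum)
  then show ?thesis by (rule R_F1[OF _ f])
qed

lemma R_penc[rintro]: "R k f \<Longrightarrow> R k g \<Longrightarrow> R k (\<lambda>xs. prod_encode (f xs, g xs))"
  unfolding prod_encode_def by (simp, intro R_add R_triangle)

definition pfst :: "nat \<Rightarrow> nat" where "pfst c = fst (prod_decode c)"
definition psnd :: "nat \<Rightarrow> nat" where "psnd c = snd (prod_decode c)"

lemma pfst_enc[simp]: "pfst (prod_encode (a, b)) = a" by (simp add: pfst_def)
lemma psnd_enc[simp]: "psnd (prod_encode (a, b)) = b" by (simp add: psnd_def)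
lemma penc_dec[simp]: "prod_encode (pfst c, psnd c) = c" by (simp add: pfst_def psnd_def)

lemma pfst_le: "pfst c \<le> c" by (metis le_prod_encode_1 penc_dec)
lemma psnd_le: "psnd c \<le> c" by (metis le_prod_encode_2 penc_dec)

lemma pfst_bmu: "pfst c = bmu (Suc c) (\<lambda>a. \<exists>b<Suc c. prod_encode (a, b) = c)"
proof -
  have ex: "\<exists>a<Suc c. \<exists>b<Suc c. prod_encode (a, b) = c"
    using pfst_le[of c] psnd_le[of c] penc_dec[of c] by (intro exI[of _ "pfst c"] conjI exI[of _ "psnd c"]) auto
  let ?a = "bmu (Suc c) (\<lambda>a. \<exists>b<Suc c. prod_encode (a, b) = c)"
  from bmu_props(1)[OF ex] obtain b where e: "prod_encode (?a, b) = c" by blast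
  have "pfst c = pfst (prod_encode (?a, b))" by (simp only: e)
  also have "\<dots> = ?a" by (rule pfst_enc)
  finally show ?thesis .
qed

lemma psnd_bmu: "psnd c = bmu (Suc c) (\<lambda>b. \<exists>a<Suc c. prod_encode (a, b) = c)"
proof -
  have ex: "\<exists>b<Suc c. \<exists>a<Suc c. prod_encode (a, b) = c"
    using pfst_le[of c] psnd_le[of c] penc_dec[of c] by (intro exI[of _ "psnd c"] conjI exI[of _ "pfst c"]) auto
  let ?b = "bmu (Suc c) (\<lambda>b. \<exists>a<Suc c. prod_encode (a, b) = c)"
  from bmu_props(1)[OF ex] obtain a where e: "prod_encode (a, ?b) = c" by blast
  have "psnd c = psnd (prod_encode (a, ?b))" by (simp only: e)
  also have "\<dots> = ?b" by (rule psnd_enc)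
  finally show ?thesis .
qed

lemma R_pfst[rintro]: "R k f \<Longrightarrow> R k (\<lambda>xs. pfst (f xs))"
proof -
  assume f: "R k f"
  have "R 1 (\<lambda>xs. bmu (Suc (xs ! 0)) (\<lambda>a. \<exists>b<Suc (xs ! 0). prod_encode (a, b) = xs ! 0))"
    by (intro rintro | simp_all only: tk)+
  then have "R 1 (\<lambda>xs. pfst (xs ! 0))" by (simp only: pfst_bmu)
  then show ?thesis by (rule R_F1[OF _ f])
qed

lemma R_psnd[rintro]: "R k f \<Longrightarrow> R k (\<lambda>xs. psnd (f xs))"
proof -
  assume f: "R k f"
  have "R 1 (\<lambda>xs. bmu (Suc (xs ! 0)) (\<lambda>b. \<exists>a<Suc (xs ! 0). prod_encode (a, b) = xs ! 0))"
    by (intro rintro | simp_all only: tk)+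
  then have "R 1 (\<lambda>xs. psnd (xs ! 0))" by (simp only: psnd_bmu)
  then show ?thesis by (rule R_F1[OF _ f])
qed

definition lcons :: "nat \<Rightarrow> nat \<Rightarrow> nat" where "lcons a l = Suc (prod_encode (a, l))"
definition lhd :: "nat \<Rightarrow> nat" where "lhd c = pfst (c - 1)"
definition ltl :: "nat \<Rightarrow> nat" where "ltl c = psnd (c - 1)"
definition lnth :: "nat \<Rightarrow> nat \<Rightarrow> nat" where "lnth j c = lhd ((ltl ^^ j) c)"
definition llen :: "nat \<Rightarrow> nat" where "llen c = bmu (Suc c) (\<lambda>j. (ltl ^^ j) c = 0)"

lemma lcons_enc[simp]: "lcons a (list_encode xs) = list_encode (a # xs)"
  by (simp add: lcons_def)

lemma ltl_enc[simp]: "ltl (Suc (prod_encode (x, l))) = l"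
  by (simp add: ltl_def)
lemma lhd_enc[simp]: "lhd (Suc (prod_encode (x, l))) = x"
  by (simp add: lhd_def)
lemma ltl_0[simp]: "ltl 0 = 0"
  by (simp add: ltl_def psnd_def prod_decode_def prod_decode_aux.simps)

lemma ltl_iter: "(ltl ^^ j) (list_encode xs) = list_encode (drop j xs)"
proof (induction j arbitrary: xs)
  case 0 then show ?case by simp
next
  case (Suc j)
  show ?case
  proof (cases xs)
    case Nil
    then show ?thesis using Suc[of "[]"] by (simp add: funpow_swap1)
  next
    case (Cons y ys)
    then show ?thesis using Suc[of ys] by (simp add: funpow_swap1)
  qed
qed

lemma lnth_enc[simp]: "j < length xs \<Longrightarrow> lnth j (list_encode xs) = xs ! j"
  unfolding lnth_def ltl_iter by (simp add: Cons_nth_drop_Suc[symmetric])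

lemma len_le_enc: "length xs \<le> list_encode xs"
proof (induction xs)
  case (Cons x xs) then show ?case using le_prod_encode_2[of "list_encode xs" x] by simp
qed simp

lemma list_encode_0: "list_encode xs = 0 \<longleftrightarrow> xs = []"
  by (cases xs) auto

lemma llen_enc[simp]: "llen (list_encode xs) = length xs"
proof -
  have ex: "\<exists>j<Suc (list_encode xs). (ltl ^^ j) (list_encode xs) = 0"
    using len_le_enc[of xs] by (intro exI[of _ "length xs"]) (auto simp: ltl_iter)
  let ?m = "llen (list_encode xs)"
  have a: "(ltl ^^ ?m) (list_encode xs) = 0" "\<And>j. j < ?m \<Longrightarrow> (ltl ^^ j) (list_encode xs) \<noteq> 0"
    using bmu_props[OF ex] unfolding llen_def by auto
  from a(1) have "length xs \<le> ?m" by (simp add: ltl_iter list_encode_0)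
  moreover have "(ltl ^^ length xs) (list_encode xs) = 0" by (simp add: ltl_iter)
  then have "\<not> length xs < ?m" using a(2) by blast
  ultimately show ?thesis by simp
qed

lemma llen_dec: "llen c = length (list_decode c)"
  using llen_enc[of "list_decode c"] by simp

lemma lnth_dec: "j < length (list_decode c) \<Longrightarrow> lnth j c = list_decode c ! j"
  using lnth_enc[of j "list_decode c"] by simp

lemma R_lcons[rintro]: "R k f \<Longrightarrow> R k g \<Longrightarrow> R k (\<lambda>xs. lcons (f xs) (g xs))"
  unfolding lcons_def by (intro rintro)

lemma R_lhd[rintro]: "R k f \<Longrightarrow> R k (\<lambda>xs. lhd (f xs))"
  unfolding lhd_def by (intro rintro)

lemma R_ltl[rintro]: "R k f \<Longrightarrow> R k (\<lambda>xs. ltl (f xs))"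
  unfolding ltl_def by (intro rintro)

lemma R_ltl_iter: "R k n \<Longrightarrow> R k f \<Longrightarrow> R k (\<lambda>xs. (ltl ^^ n xs) (f xs))"
  by (rule R_iter[OF R_ltl[OF R_proj]]) simp_all

lemma R_lnth[rintro]: "R k n \<Longrightarrow> R k f \<Longrightarrow> R k (\<lambda>xs. lnth (n xs) (f xs))"
  unfolding lnth_def by (intro R_lhd R_ltl_iter)

lemma R_llen_raw: "R k f \<Longrightarrow> R k (\<lambda>xs. llen (f xs))"
proof -
  assume f: "R k f"
  have "R 1 (\<lambda>xs. bmu (Suc (xs ! 0)) (\<lambda>j. (ltl ^^ j) (xs ! 0) = 0))"
    by (intro rintro R_ltl_iter | simp_all only: tk)+
  then have "R 1 (\<lambda>xs. llen (xs ! 0))" by (simp only: llen_def)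
  then show ?thesis by (rule R_F1[OF _ f])
qed

definition stl :: "nat \<Rightarrow> nat" where "stl c = (c - 1) div 2"
definition slen :: "nat \<Rightarrow> nat" where "slen c = bmu (Suc c) (\<lambda>j. (stl ^^ j) c = 0)"
definition stake :: "nat \<Rightarrow> nat \<Rightarrow> nat" where "stake k c = c - 2 ^ k * (stl ^^ k) c"
definition sbit :: "nat \<Rightarrow> nat \<Rightarrow> nat" where "sbit k c = (if even ((stl ^^ k) c) then 1 else 0)"

lemma div2_bmu: "c div 2 = bmu (Suc c) (\<lambda>q. c < 2 * q + 2)"
proof -
  have ex: "\<exists>q<Suc c. c < 2 * q + 2" by (intro exI[of _ "c div 2"]) auto
  have a: "c < 2 * bmu (Suc c) (\<lambda>q. c < 2 * q + 2) + 2"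
    "\<And>j. j < bmu (Suc c) (\<lambda>q. c < 2 * q + 2) \<Longrightarrow> \<not> c < 2 * j + 2"
    using bmu_props[OF ex] by auto
  show ?thesis using a(1) a(2)[of "c div 2"] by linarith
qed

lemma R_div2[rintro]: "R k f \<Longrightarrow> R k (\<lambda>xs. f xs div 2)"
proof -
  assume f: "R k f"
  have "R 1 (\<lambda>xs. bmu (Suc (xs ! 0)) (\<lambda>q. xs ! 0 < 2 * q + 2))"
    by (intro rintro | simp_all only: tk)+
  then have "R 1 (\<lambda>xs. xs ! 0 div 2)" by (simp only: div2_bmu)
  then show ?thesis by (rule R_F1[OF _ f])
qed

lemma rp_even[rintro]: "R k f \<Longrightarrow> rp k (\<lambda>xs. even (f xs))"
proof -
  assume f: "R k f"
  have "rp k (\<lambda>xs. 2 * (f xs div 2) = f xs)" by (intro rintro f)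
  then show ?thesis by (rule rp_cong) (simp add: dvd_mult_div_cancel[symmetric] dvd_def, metis dvd_def dvd_mult_div_cancel)
qed

lemma R_stl[rintro]: "R k f \<Longrightarrow> R k (\<lambda>xs. stl (f xs))"
  unfolding stl_def by (intro rintro)

lemma R_stl_iter: "R k n \<Longrightarrow> R k f \<Longrightarrow> R k (\<lambda>xs. (stl ^^ n xs) (f xs))"
  by (rule R_iter[OF R_stl[OF R_proj]]) simp_all

lemma R_slen[rintro]: "R k f \<Longrightarrow> R k (\<lambda>xs. slen (f xs))"
proof -
  assume f: "R k f"
  have "R 1 (\<lambda>xs. bmu (Suc (xs ! 0)) (\<lambda>j. (stl ^^ j) (xs ! 0) = 0))"
    by (intro rintro R_stl_iter | simp_all only: tk)+
  then have "R 1 (\<lambda>xs. slen (xs ! 0))" by (simp only: slen_def)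
  then show ?thesis by (rule R_F1[OF _ f])
qed

lemma R_stake[rintro]: "R k n \<Longrightarrow> R k f \<Longrightarrow> R k (\<lambda>xs. stake (n xs) (f xs))"
  unfolding stake_def by (intro rintro R_stl_iter)

lemma R_sbit[rintro]: "R k n \<Longrightarrow> R k f \<Longrightarrow> R k (\<lambda>xs. sbit (n xs) (f xs))"
  unfolding sbit_def by (intro rintro R_stl_iter)

lemma stl_code1[simp]: "stl (Suc (2 * c)) = c"
  by (simp add: stl_def)
lemma stl_code2[simp]: "stl (Suc (Suc (2 * c))) = c"
  by (simp add: stl_def)
lemma stl_0[simp]: "stl 0 = 0" by (simp add: stl_def)

lemma stl_iter: "(stl ^^ j) (str_code s) = str_code (drop j s)"
proof (induction j arbitrary: s)
  case 0 then show ?case by simp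
next
  case (Suc j)
  show ?case
  proof (cases s)
    case Nil
    then show ?thesis using Suc[of "[]"] by (simp add: funpow_swap1)
  next
    case (Cons y ys)
    then show ?thesis using Suc[of ys] by (simp add: funpow_swap1)
  qed
qed

lemma str_code_0: "str_code s = 0 \<longleftrightarrow> s = []"
  by (cases s) auto

lemma len_le_str: "length s \<le> str_code s"
  by (induction s) auto

lemma slen_code[simp]: "slen (str_code s) = length s"
proof -
  have ex: "\<exists>j<Suc (str_code s). (stl ^^ j) (str_code s) = 0"
    using len_le_str[of s] by (intro exI[of _ "length s"]) (auto simp: stl_iter)
  let ?m = "slen (str_code s)"
  have a: "(stl ^^ ?m) (str_code s) = 0" "\<And>j. j < ?m \<Longrightarrow> (stl ^^ j) (str_code s) \<noteq> 0"
    using bmu_props[OF ex] unfolding slen_def by auto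
  from a(1) have "length s \<le> ?m" by (simp add: stl_iter str_code_0)
  moreover have "(stl ^^ length s) (str_code s) = 0" by (simp add: stl_iter)
  then have "\<not> length s < ?m" using a(2) by blast
  ultimately show ?thesis by simp
qed

lemma str_code_split: "str_code s = str_code (take k s) + 2 ^ k * str_code (drop k s)"
proof (induction s arbitrary: k)
  case Nil then show ?case by simp
next
  case (Cons x s)
  show ?case
  proof (cases k)
    case (Suc m)
    then show ?thesis using Cons.IH[of m] by (simp add: algebra_simps)
  qed simp
qed

lemma stake_code[simp]: "stake k (str_code s) = str_code (take k s)"
  unfolding stake_def stl_iter using str_code_split[of s k] by simp

lemma sbit_code[simp]: "k < length s \<Longrightarrow> sbit k (str_code s) = of_bool (s ! k)"
  unfolding sbit_def stl_iter by (simp add: Cons_nth_drop_Suc[symmetric])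

declare R_llen_raw[rintro]

lemma rp_F1: "rp 1 (\<lambda>ys. P (ys ! 0)) \<Longrightarrow> R k f \<Longrightarrow> rp k (\<lambda>xs. P (f xs))"
  unfolding rp_def by (rule R_F1[where F="\<lambda>a. if P a then 1 else 0"])
lemma rp_F2: "rp 2 (\<lambda>ys. P (ys ! 0) (ys ! 1)) \<Longrightarrow> R k f \<Longrightarrow> R k g \<Longrightarrow> rp k (\<lambda>xs. P (f xs) (g xs))"
  unfolding rp_def by (rule R_F2[where F="\<lambda>a b. if P a b then 1 else 0"])
lemma rp_F3: "rp 3 (\<lambda>ys. P (ys ! 0) (ys ! 1) (ys ! 2)) \<Longrightarrow> R k f \<Longrightarrow> R k g \<Longrightarrow> R k h \<Longrightarrow>
  rp k (\<lambda>xs. P (f xs) (g xs) (h xs))"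
  unfolding rp_def by (rule R_F3[where F="\<lambda>a b c. if P a b c then 1 else 0"])
lemma rp_F4: "rp 4 (\<lambda>ys. P (ys ! 0) (ys ! 1) (ys ! 2) (ys ! 3)) \<Longrightarrow> R k f \<Longrightarrow> R k g \<Longrightarrow> R k h \<Longrightarrow> R k l \<Longrightarrow>
  rp k (\<lambda>xs. P (f xs) (g xs) (h xs) (l xs))"
  unfolding rp_def by (rule R_F4[where F="\<lambda>a b c d. if P a b c d then 1 else 0"])
lemma rp_F5: "rp 5 (\<lambda>ys. P (ys ! 0) (ys ! 1) (ys ! 2) (ys ! 3) (ys ! 4)) \<Longrightarrow> R k f \<Longrightarrow> R k g \<Longrightarrow> R k h \<Longrightarrow> R k l \<Longrightarrow> R k m \<Longrightarrow>
  rp k (\<lambda>xs. P (f xs) (g xs) (h xs) (l xs) (m xs))"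
  unfolding rp_def by (rule R_F5[where F="\<lambda>a b c d e. if P a b c d e then 1 else 0"])


lemma lnth_cons0[simp]: "lnth 0 (Suc (prod_encode (x, l))) = x"
  by (simp add: lnth_def)
lemma lnth_consS[simp]: "lnth (Suc j) (Suc (prod_encode (x, l))) = lnth j l"
  by (simp add: lnth_def funpow_Suc_right del: funpow.simps)

lemma lcons_simp[simp]: "lcons a l = Suc (prod_encode (a, l))"
  by (simp add: lcons_def)
lemma llen_cons[simp]: "llen (Suc (prod_encode (x, l))) = Suc (llen l)"
  by (simp add: llen_dec)

fun enc :: "recf \<Rightarrow> nat" where
  "enc Zero = prod_encode (0, 0)"
| "enc Succ = prod_encode (1, 0)"
| "enc (Proj i) = prod_encode (2, i)"
| "enc (Comp f gs) = prod_encode (3, prod_encode (enc f, list_encode (map enc gs)))"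
| "enc (Prec f g) = prod_encode (4, prod_encode (enc f, enc g))"
| "enc (Mini f) = prod_encode (5, enc f)"

definition trip :: "nat \<Rightarrow> nat \<Rightarrow> nat \<Rightarrow> nat" where
  "trip c x y = prod_encode (c, prod_encode (x, y))"

lemma trip_sel[simp]: "pfst (trip c x y) = c" "pfst (psnd (trip c x y)) = x" "psnd (psnd (trip c x y)) = y"
  by (simp_all add: trip_def)

lemma trip_eta: "trip (pfst e) (pfst (psnd e)) (psnd (psnd e)) = e"
  by (simp add: trip_def)

lemma trip_eq[simp]: "trip c x y = trip c' x' y' \<longleftrightarrow> c = c' \<and> x = x' \<and> y = y'"
  by (simp add: trip_def)

lemma R_trip[rintro]: "R k f \<Longrightarrow> R k g \<Longrightarrow> R k h \<Longrightarrow> R k (\<lambda>xs. trip (f xs) (g xs) (h xs))"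
  unfolding trip_def by (intro rintro)

definition okX :: "((nat \<Rightarrow> bool) \<Rightarrow> bool) \<Rightarrow> nat \<Rightarrow> bool" where
  "okX Qx e = (let c = pfst e; x = pfst (psnd e); y = psnd (psnd e); t = pfst c; a = psnd c in
   (t = 0 \<and> y = 0) \<or>
   (t = 1 \<and> 0 < llen x \<and> y = Suc (lnth 0 x)) \<or>
   (t = 2 \<and> a < llen x \<and> y = lnth a x) \<or>
   (t = 3 \<and> Qx (\<lambda>e'. pfst e' = pfst a \<and> psnd (psnd e') = y \<and> llen (pfst (psnd e')) = llen (psnd a) \<and>
        (\<forall>m<llen (psnd a). Qx (\<lambda>e''. e'' = trip (lnth m (psnd a)) x (lnth m (pfst (psnd e'))))))) \<or>
   (t = 4 \<and> 0 < llen x \<and> lnth 0 x = 0 \<and> Qx (\<lambda>e'. e' = trip (pfst a) (ltl x) y)) \<or>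
   (t = 4 \<and> 0 < llen x \<and> 0 < lnth 0 x \<and> Qx (\<lambda>e'. pfst e' = c \<and> pfst (psnd e') = lcons (lnth 0 x - 1) (ltl x) \<and>
        Qx (\<lambda>e''. e'' = trip (psnd a) (lcons (lnth 0 x - 1) (lcons (psnd (psnd e')) (ltl x))) y))) \<or>
   (t = 5 \<and> Qx (\<lambda>e'. e' = trip a (lcons y x) 0) \<and>
        (\<forall>m<y. Qx (\<lambda>e'. pfst e' = a \<and> pfst (psnd e') = lcons m x \<and> 0 < psnd (psnd e')))))"

definition okN :: "nat \<Rightarrow> nat \<Rightarrow> bool" where
  "okN L k = okX (\<lambda>P. \<exists>j<k. P (lnth j L)) (lnth k L)"

definition valid :: "nat \<Rightarrow> bool" where
  "valid L = (\<forall>k<llen L. okN L k)"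

definition certN :: "nat \<Rightarrow> nat \<Rightarrow> nat \<Rightarrow> nat \<Rightarrow> bool" where
  "certN c x y t = (\<exists>L<Suc t. valid L \<and> (\<exists>j<llen L. lnth j L = trip c x y))"

lemma rp_okN: "rp 2 (\<lambda>xs. okN (xs ! 0) (xs ! 1))"
  unfolding okN_def okX_def Let_def
  by (intro rintro | simp_all only: tk)+

lemma rp_valid: "rp 1 (\<lambda>xs. valid (xs ! 0))"
proof -
  have "rp 1 (\<lambda>xs. \<forall>k<llen (xs ! 0). okN (xs ! 0) k)"
    by (intro rintro rp_F2[OF rp_okN] | simp_all only: tk)+
  then show ?thesis unfolding valid_def .
qed

lemma rp_certN: "rp 4 (\<lambda>xs. certN (xs ! 0) (xs ! 1) (xs ! 2) (xs ! 3))"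
  unfolding certN_def
  by (intro rintro rp_F2[OF rp_okN] rp_F1[OF rp_valid] | simp_all only: tk)+


definition okS :: "nat set \<Rightarrow> nat \<Rightarrow> bool" where
  "okS S e = okX (\<lambda>P. \<exists>e'\<in>S. P e') e"

definition validL :: "nat list \<Rightarrow> bool" where
  "validL Ls = (\<forall>k<length Ls. okS (set (take k Ls)) (Ls ! k))"

lemma okN_enc: "k < length Ls \<Longrightarrow> okN (list_encode Ls) k = okS (set (take k Ls)) (Ls ! k)"
proof -
  assume k: "k < length Ls"
  have "(\<lambda>P. \<exists>j<k. P (lnth j (list_encode Ls))) = (\<lambda>P. \<exists>e'\<in>set (take k Ls). P e')"
  proof (rule ext)
    fix P
    show "(\<exists>j<k. P (lnth j (list_encode Ls))) = (\<exists>e'\<in>set (take k Ls). P e')"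
    proof
      assume "\<exists>j<k. P (lnth j (list_encode Ls))"
      then obtain j where j: "j < k" "P (lnth j (list_encode Ls))" by blast
      have "Ls ! j = take k Ls ! j" using j(1) by simp
      moreover have "j < length (take k Ls)" using j(1) k by simp
      ultimately have "Ls ! j \<in> set (take k Ls)" by (metis nth_mem)
      moreover have "lnth j (list_encode Ls) = Ls ! j" using j(1) k by simp
      ultimately show "\<exists>e'\<in>set (take k Ls). P e'" using j(2) by metis
    next
      assume "\<exists>e'\<in>set (take k Ls). P e'"
      then obtain e' where e': "e' \<in> set (take k Ls)" "P e'" by blast
      then obtain i where i: "i < length (take k Ls)" "take k Ls ! i = e'" by (metis in_set_conv_nth)
      have "i < k" "i < length Ls" using i(1) by auto
      then have "lnth i (list_encode Ls) = e'" using i(2) by simp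
      then show "\<exists>j<k. P (lnth j (list_encode Ls))" using \<open>i < k\<close> e'(2) by blast
    qed
  qed
  then show ?thesis unfolding okN_def okS_def using k by simp
qed

lemma valid_enc: "valid (list_encode Ls) = validL Ls"
  unfolding valid_def validL_def by (simp add: okN_enc)

lemma okS_mono: assumes "S \<subseteq> S'" "okS S e" shows "okS S' e"
  using assms(2) unfolding okS_def okX_def Let_def
  apply (elim disjE)
  subgoal by blast
  subgoal by blast
  subgoal by blast
  subgoal using assms(1) by (elim conjE bexE) (intro disjI2 disjI1 conjI bexI, auto)
  subgoal using assms(1) by (elim conjE bexE) (intro disjI2 disjI1 conjI bexI, auto)
  subgoal using assms(1) by (elim conjE bexE) (intro disjI2 disjI1 conjI bexI, auto)
  subgoal using assms(1) by (elim conjE) (intro disjI2 conjI; blast)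
  done

definition Good :: "nat set \<Rightarrow> bool" where
  "Good S = (\<forall>e\<in>S. \<forall>P xs y. e = trip (enc P) (list_encode xs) y \<longrightarrow> eval P xs y)"

lemma GoodD: "Good S \<Longrightarrow> trip (enc P) (list_encode xs) y \<in> S \<Longrightarrow> eval P xs y"
  unfolding Good_def by blast

lemma GoodD': "Good S \<Longrightarrow> e \<in> S \<Longrightarrow> pfst e = enc P \<Longrightarrow> eval P (list_decode (pfst (psnd e))) (psnd (psnd e))"
  using GoodD[of S P "list_decode (pfst (psnd e))" "psnd (psnd e)"] trip_eta[of e] by simp

lemma sound_step:
  assumes G: "Good S" and ok: "okS S (trip (enc P) (list_encode xs) y)"
  shows "eval P xs y"
proof (cases P)
  case Zero
  then show ?thesis using ok by (simp add: okS_def okX_def eval_Zero)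
next
  case Succ
  then have h: "0 < length xs" "y = Suc (lnth 0 (list_encode xs))"
    using ok by (simp_all add: okS_def okX_def Let_def)
  then obtain x xs' where "xs = x # xs'" by (cases xs) auto
  then show ?thesis using h Succ by (simp add: eval_Succ)
next
  case (Proj i)
  then have h: "i < length xs" "y = lnth i (list_encode xs)"
    using ok by (simp_all add: okS_def okX_def Let_def)
  then show ?thesis using Proj by (simp add: eval_Proj)
next
  case (Comp f gs)
  from ok obtain e' where e': "e' \<in> S" "pfst e' = enc f" "psnd (psnd e') = y"
    "llen (pfst (psnd e')) = length gs"
    "\<forall>m<length gs. trip (enc (gs ! m)) (list_encode xs) (lnth m (pfst (psnd e'))) \<in> S"
    by (auto simp: okS_def okX_def Let_def Comp)
  define ys where "ys = list_decode (pfst (psnd e'))"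
  have f: "eval f ys y" using GoodD'[OF G e'(1,2)] e'(3) by (simp add: ys_def)
  have len: "length ys = length gs" using e'(4) by (simp add: ys_def llen_dec)
  have "list_all2 (\<lambda>g y. eval g xs y) gs ys"
  proof (rule list_all2_all_nthI)
    show "length gs = length ys" using len by simp
    fix m assume m: "m < length gs"
    have "lnth m (pfst (psnd e')) = ys ! m" using m len by (simp add: ys_def lnth_dec)
    then show "eval (gs ! m) xs (ys ! m)" using GoodD[OF G] e'(5) m by metis
  qed
  then show ?thesis using f Comp by (auto intro: eval_Comp)
next
  case (Prec f g)
  have l: "0 < length xs" using ok by (auto simp: okS_def okX_def Let_def Prec)
  then obtain n xs' where xs: "xs = n # xs'" by (cases xs) auto
  show ?thesis
  proof (cases n)
    case 0
    then have "trip (enc f) (list_encode xs') y \<in> S"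
      using ok by (auto simp: okS_def okX_def Let_def Prec xs)
    then show ?thesis using GoodD[OF G] xs 0 Prec by (auto intro: eval_Prec0)
  next
    case (Suc n')
    from ok obtain e' where e': "e' \<in> S" "pfst e' = enc (Prec f g)"
      "pfst (psnd e') = list_encode (n' # xs')"
      "trip (enc g) (list_encode (n' # psnd (psnd e') # xs')) y \<in> S"
      by (auto simp: okS_def okX_def Let_def Prec xs Suc)
    have "eval (Prec f g) (n' # xs') (psnd (psnd e'))"
      using GoodD'[OF G e'(1,2)] e'(3) by simp
    moreover have "eval g (n' # psnd (psnd e') # xs') y" using GoodD[OF G e'(4)] .
    ultimately show ?thesis using Prec xs Suc by (auto intro: eval_PrecS)
  qed
next
  case (Mini f)
  from ok have h: "trip (enc f) (list_encode (y # xs)) 0 \<in> S"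
    "\<forall>m<y. \<exists>e'\<in>S. pfst e' = enc f \<and> pfst (psnd e') = list_encode (m # xs) \<and> 0 < psnd (psnd e')"
    by (auto simp: okS_def okX_def Let_def Mini)
  have "\<forall>m<y. \<exists>z. eval f (m # xs) z \<and> 0 < z"
  proof (intro allI impI)
    fix m assume "m < y"
    then obtain e' where e': "e' \<in> S" "pfst e' = enc f" "pfst (psnd e') = list_encode (m # xs)" "0 < psnd (psnd e')"
      using h(2) by blast
    show "\<exists>z. eval f (m # xs) z \<and> 0 < z"
      using GoodD'[OF G e'(1,2)] e'(3,4) by auto
  qed
  then show ?thesis using GoodD[OF G h(1)] Mini by (auto intro: eval_Mini)
qed

lemma validL_Good: "validL Ls \<Longrightarrow> k \<le> length Ls \<Longrightarrow> Good (set (take k Ls))"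
proof (induction k)
  case 0 then show ?case by (simp add: Good_def)
next
  case (Suc k)
  then have k: "k < length Ls" by simp
  have G: "Good (set (take k Ls))" using Suc by simp
  have ok: "okS (set (take k Ls)) (Ls ! k)" using Suc.prems k by (simp add: validL_def)
  have "set (take (Suc k) Ls) = insert (Ls ! k) (set (take k Ls))"
    using k by (simp add: take_Suc_conv_app_nth)
  then show ?case using G ok sound_step unfolding Good_def by auto
qed

lemma validL_sound: "validL Ls \<Longrightarrow> trip (enc P) (list_encode xs) y \<in> set Ls \<Longrightarrow> eval P xs y"
  using validL_Good[of Ls "length Ls"] GoodD by simp


lemma validL_Nil: "validL []" by (simp add: validL_def)

lemma validL_append: assumes A: "validL A" and B: "validL B" shows "validL (A @ B)"
  unfolding validL_def
proof (intro allI impI)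
  fix k assume k: "k < length (A @ B)"
  show "okS (set (take k (A @ B))) ((A @ B) ! k)"
  proof (cases "k < length A")
    case True
    then show ?thesis using A by (simp add: validL_def nth_append)
  next
    case False
    define k' where "k' = k - length A"
    have k': "k' < length B" "k = length A + k'" using k False by (auto simp: k'_def)
    have "okS (set (take k' B)) (B ! k')" using B k' by (simp add: validL_def)
    moreover have "set (take k' B) \<subseteq> set (take k (A @ B))" using k' by auto
    ultimately have "okS (set (take k (A @ B))) (B ! k')" by (rule okS_mono[rotated])
    then show ?thesis using k' by (simp add: nth_append)
  qed
qed

lemma validL_snoc: assumes A: "validL A" and ok: "okS (set A) e" shows "validL (A @ [e])"
  unfolding validL_def
proof (intro allI impI)
  fix k assume k: "k < length (A @ [e])"
  show "okS (set (take k (A @ [e]))) ((A @ [e]) ! k)"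
  proof (cases "k < length A")
    case True
    then show ?thesis using A by (simp add: validL_def nth_append)
  next
    case False
    then have "k = length A" using k by simp
    then show ?thesis using ok by simp
  qed
qed

lemma collect:
  "(\<forall>i<(n::nat). \<exists>L. validL L \<and> (\<exists>e\<in>set L. Q i e)) \<Longrightarrow> \<exists>L. validL L \<and> (\<forall>i<n. \<exists>e\<in>set L. Q i e)"
proof (induction n)
  case 0 then show ?case using validL_Nil by blast
next
  case (Suc n)
  then obtain L1 where L1: "validL L1" "\<forall>i<n. \<exists>e\<in>set L1. Q i e" by auto
  obtain L2 where L2: "validL L2" "\<exists>e\<in>set L2. Q n e" using Suc.prems[rule_format, of n] by auto
  have "validL (L1 @ L2)" using L1 L2 validL_append by blast
  moreover have "\<forall>i<Suc n. \<exists>e\<in>set (L1 @ L2). Q i e"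
    using L1(2) L2(2) by (auto simp: less_Suc_eq)
  ultimately show ?case by blast
qed

lemma single_valid: "okS {} e \<Longrightarrow> \<exists>L. validL L \<and> e \<in> set L"
  using validL_snoc[OF validL_Nil, of e] by auto

lemma complete: assumes "eval p xs y" shows "\<exists>L. validL L \<and> trip (enc p) (list_encode xs) y \<in> set L"
  using assms
proof (induction rule: eval.induct)
  case (eval_Zero xs)
  show ?case by (rule single_valid) (simp add: okS_def okX_def)
next
  case (eval_Succ x xs)
  show ?case by (rule single_valid) (simp add: okS_def okX_def)
next
  case (eval_Proj i xs)
  show ?case by (rule single_valid) (use eval_Proj in \<open>simp add: okS_def okX_def\<close>)
next
  case (eval_Comp xs gs ys f z)
  have "\<forall>m<length gs. \<exists>L. validL L \<and> (\<exists>e\<in>set L. e = trip (enc (gs ! m)) (list_encode xs) (ys ! m))"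
    using eval_Comp.IH(1) by (auto simp: list_all2_conv_all_nth)
  from collect[OF this] obtain L1 where L1: "validL L1"
    "\<forall>m<length gs. trip (enc (gs ! m)) (list_encode xs) (ys ! m) \<in> set L1" by auto
  obtain L2 where L2: "validL L2" "trip (enc f) (list_encode ys) z \<in> set L2" using eval_Comp.IH(2) by auto
  have len: "length ys = length gs" using eval_Comp.IH(1) by (simp add: list_all2_conv_all_nth)
  let ?e = "trip (enc (Comp f gs)) (list_encode xs) z"
  have "okS (set (L1 @ L2)) ?e"
    unfolding okS_def okX_def Let_def
    apply (simp only: trip_sel enc.simps pfst_enc psnd_enc)
    apply (rule disjI2, rule disjI2, rule disjI2, rule disjI1)
    apply (intro conjI refl bexI[of _ "trip (enc f) (list_encode ys) z"])
    using L1 L2 len by auto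
  then have "validL ((L1 @ L2) @ [?e])" using validL_snoc validL_append L1 L2 by blast
  then show ?case by auto
next
  case (eval_Prec0 f xs y g)
  then obtain L where L: "validL L" "trip (enc f) (list_encode xs) y \<in> set L" by auto
  let ?e = "trip (enc (Prec f g)) (list_encode (0 # xs)) y"
  have "okS (set L) ?e" unfolding okS_def okX_def Let_def using L by simp
  then have "validL (L @ [?e])" using validL_snoc L by blast
  then show ?case by auto
next
  case (eval_PrecS f g n xs y z)
  obtain L1 where L1: "validL L1" "trip (enc (Prec f g)) (list_encode (n # xs)) y \<in> set L1"
    using eval_PrecS.IH(1) by auto
  obtain L2 where L2: "validL L2" "trip (enc g) (list_encode (n # y # xs)) z \<in> set L2"
    using eval_PrecS.IH(2) by auto
  let ?e = "trip (enc (Prec f g)) (list_encode (Suc n # xs)) z"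
  have "okS (set (L1 @ L2)) ?e"
    unfolding okS_def okX_def Let_def
    apply (simp only: trip_sel enc.simps pfst_enc psnd_enc)
    apply (rule disjI2, rule disjI2, rule disjI2, rule disjI2, rule disjI2, rule disjI1)
    apply (intro conjI)
       apply simp
      apply simp
     apply simp
    apply (rule bexI[of _ "trip (enc (Prec f g)) (list_encode (n # xs)) y"])
    using L1 L2 by auto
  then have "validL ((L1 @ L2) @ [?e])" using validL_snoc validL_append L1 L2 by blast
  then show ?case by auto
next
  case (eval_Mini f n xs)
  obtain L1 where L1: "validL L1" "trip (enc f) (list_encode (n # xs)) 0 \<in> set L1"
    using eval_Mini.IH(1) by auto
  have "\<forall>m<n. \<exists>L. validL L \<and> (\<exists>e\<in>set L. pfst e = enc f \<and> pfst (psnd e) = list_encode (m # xs) \<and> 0 < psnd (psnd e))"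
  proof (intro allI impI)
    fix m assume "m < n"
    then obtain y L where "0 < y" "validL L" "trip (enc f) (list_encode (m # xs)) y \<in> set L"
      using eval_Mini.IH(2) by blast
    then show "\<exists>L. validL L \<and> (\<exists>e\<in>set L. pfst e = enc f \<and> pfst (psnd e) = list_encode (m # xs) \<and> 0 < psnd (psnd e))"
      by (intro exI[of _ L] conjI bexI[of _ "trip (enc f) (list_encode (m # xs)) y"]) auto
  qed
  from collect[OF this] obtain L2 where L2: "validL L2"
    "\<forall>m<n. \<exists>e\<in>set L2. pfst e = enc f \<and> pfst (psnd e) = list_encode (m # xs) \<and> 0 < psnd (psnd e)" by auto
  let ?e = "trip (enc (Mini f)) (list_encode xs) n"
  have "okS (set (L1 @ L2)) ?e"
    unfolding okS_def okX_def Let_def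
    apply (simp only: trip_sel enc.simps pfst_enc psnd_enc)
    apply (rule disjI2, rule disjI2, rule disjI2, rule disjI2, rule disjI2, rule disjI2)
    apply (intro conjI)
    using L1 L2 by auto
  then have "validL ((L1 @ L2) @ [?e])" using validL_snoc validL_append L1 L2 by blast
  then show ?case by auto
qed

inductive_cases evalZeroE: "eval Zero xs y"
inductive_cases evalSuccE: "eval Succ xs y"
inductive_cases evalProjE: "eval (Proj i) xs y"
inductive_cases evalCompE: "eval (Comp f gs) xs y"
inductive_cases evalPrecE: "eval (Prec f g) xs y"
inductive_cases evalMiniE: "eval (Mini f) xs y"

lemma eval_det: assumes "eval p xs y" "eval p xs y'" shows "y = y'"
  using assms
proof (induction arbitrary: y' rule: eval.induct)
  case (eval_Zero xs) from eval_Zero.prems show ?case by (rule evalZeroE) simp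
next
  case (eval_Succ x xs) from eval_Succ.prems show ?case by (rule evalSuccE) simp
next
  case (eval_Proj i xs) from eval_Proj.prems show ?case by (rule evalProjE) simp
next
  case (eval_Comp xs gs ys f z)
  from eval_Comp.prems obtain ys' where ys': "list_all2 (\<lambda>g y. eval g xs y) gs ys'" "eval f ys' y'"
    by (rule evalCompE) blast
  have l: "length ys = length gs" "length ys' = length gs"
    using eval_Comp.IH(1) ys'(1) by (simp_all add: list_all2_conv_all_nth)
  have "ys = ys'"
  proof (rule nth_equalityI)
    show "length ys = length ys'" using l by simp
    fix m assume m: "m < length ys"
    have a: "eval (gs ! m) xs (ys ! m) \<and> (\<forall>y'. eval (gs ! m) xs y' \<longrightarrow> ys ! m = y')"
      using eval_Comp.IH(1) m l list_all2_nthD by fastforce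
    have b: "eval (gs ! m) xs (ys' ! m)"
      using ys'(1) m l list_all2_nthD by fastforce
    show "ys ! m = ys' ! m" using a b by blast
  qed
  then show ?case using eval_Comp.IH(2) ys'(2) by blast
next
  case (eval_Prec0 f xs y g)
  from eval_Prec0.prems show ?case
    by (rule evalPrecE) (use eval_Prec0.IH in auto)
next
  case (eval_PrecS f g n xs y z)
  from eval_PrecS.prems show ?case
  proof (rule evalPrecE)
    fix y2 n2 xs2 assume "Suc n # xs = Suc n2 # xs2" "eval (Prec f g) (n2 # xs2) y2" "eval g (n2 # y2 # xs2) y'"
    then have "eval (Prec f g) (n # xs) y2" "eval g (n # y2 # xs) y'" by auto
    then show ?thesis using eval_PrecS.IH by blast
  qed simp
next
  case (eval_Mini f n xs)
  from eval_Mini.prems have n': "eval f (y' # xs) 0" "\<forall>m<y'. \<exists>y. eval f (m # xs) y \<and> 0 < y"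
    by (rule evalMiniE, blast)+
  show ?case
  proof (rule linorder_cases[of n y'])
    assume "n < y'"
    then obtain z where "eval f (n # xs) z" "0 < z" using n'(2) by blast
    then show ?thesis using eval_Mini.IH(1) by blast
  next
    assume "y' < n"
    then obtain z where "\<forall>z'. eval f (y' # xs) z' \<longrightarrow> z = z'" "0 < z"
      using eval_Mini.IH(2) by blast
    then show ?thesis using n'(1) by blast
  qed
qed

lemma cert_sound: "certN (enc P) (list_encode xs) y t \<Longrightarrow> eval P xs y"
proof -
  assume "certN (enc P) (list_encode xs) y t"
  then obtain L j where L: "valid L" "j < llen L" "lnth j L = trip (enc P) (list_encode xs) y"
    unfolding certN_def by blast
  define Ls where "Ls = list_decode L"
  have L': "L = list_encode Ls" by (simp add: Ls_def)
  have "validL Ls" using L(1) valid_enc L' by simp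
  moreover have "trip (enc P) (list_encode xs) y \<in> set Ls"
    using L(2,3) L' by (metis llen_enc lnth_enc nth_mem)
  ultimately show ?thesis by (rule validL_sound)
qed

lemma cert_complete: "eval P xs y \<Longrightarrow> \<exists>t. certN (enc P) (list_encode xs) y t"
proof -
  assume "eval P xs y"
  from complete[OF this] obtain Ls where Ls: "validL Ls" "trip (enc P) (list_encode xs) y \<in> set Ls" by blast
  then obtain j where j: "j < length Ls" "Ls ! j = trip (enc P) (list_encode xs) y"
    by (metis in_set_conv_nth)
  have "certN (enc P) (list_encode xs) y (list_encode Ls)"
    unfolding certN_def using Ls(1) j valid_enc by (intro exI[of _ "list_encode Ls"]) auto
  then show ?thesis by blast
qed

lemma cert_mono: "certN c x y t \<Longrightarrow> t \<le> t' \<Longrightarrow> certN c x y t'"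
  unfolding certN_def by (meson le_imp_less_Suc less_Suc_eq_le order_trans)


declare rp_F4[OF rp_certN, rintro]

definition DefN :: "nat \<Rightarrow> nat \<Rightarrow> nat \<Rightarrow> bool" where
  "DefN c x n = (\<exists>y<Suc n. certN c x y n)"
definition firstT :: "nat \<Rightarrow> nat \<Rightarrow> nat \<Rightarrow> nat" where
  "firstT c x n = bmu (Suc n) (\<lambda>t. DefN c x t)"
definition valN :: "nat \<Rightarrow> nat \<Rightarrow> nat \<Rightarrow> nat" where
  "valN c x n = bmu (Suc n) (\<lambda>y. certN c x y (firstT c x n))"
definition args :: "nat \<Rightarrow> nat \<Rightarrow> nat \<Rightarrow> nat" where
  "args sc xb j = lcons sc (lcons xb (lcons j 0))"
definition cu :: "nat \<Rightarrow> nat" where "cu i = pfst i"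
definition cv :: "nat \<Rightarrow> nat" where "cv i = pfst (psnd i)"
definition cw :: "nat \<Rightarrow> nat" where "cw i = psnd (psnd i)"
definition kn :: "nat \<Rightarrow> nat \<Rightarrow> nat \<Rightarrow> nat \<Rightarrow> bool" where
  "kn i sc j n = (\<forall>xb<2. DefN (cu i) (args sc xb j) n \<and> DefN (cv i) (args sc xb j) n \<and> DefN (cw i) (args sc xb j) n)"
definition NN :: "nat \<Rightarrow> nat \<Rightarrow> nat \<Rightarrow> nat \<Rightarrow> nat \<Rightarrow> nat" where
  "NN i sc xb j n = valN (cu i) (args sc xb j) n - valN (cv i) (args sc xb j) n"
definition EE :: "nat \<Rightarrow> nat \<Rightarrow> nat \<Rightarrow> nat \<Rightarrow> nat \<Rightarrow> nat" where
  "EE i sc xb j n = Suc (valN (cw i) (args sc xb j) n)"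
definition known :: "nat \<Rightarrow> nat \<Rightarrow> nat \<Rightarrow> nat \<Rightarrow> bool" where
  "known i sc m n = (\<forall>j<Suc m. kn i sc j n)"
definition amax :: "nat \<Rightarrow> nat \<Rightarrow> nat \<Rightarrow> nat \<Rightarrow> nat \<Rightarrow> nat" where
  "amax i sc xb m n = bmu (Suc m) (\<lambda>j. \<forall>j'<Suc m. NN i sc xb j' n * EE i sc xb j n \<le> NN i sc xb j n * EE i sc xb j' n)"
definition RN :: "nat \<Rightarrow> nat \<Rightarrow> nat \<Rightarrow> nat \<Rightarrow> nat \<Rightarrow> nat" where
  "RN i sc xb m n = NN i sc xb (amax i sc xb m n) n"
definition RE :: "nat \<Rightarrow> nat \<Rightarrow> nat \<Rightarrow> nat \<Rightarrow> nat \<Rightarrow> nat" where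
  "RE i sc xb m n = EE i sc xb (amax i sc xb m n) n"
definition acc :: "nat \<Rightarrow> nat \<Rightarrow> nat \<Rightarrow> nat \<Rightarrow> nat \<Rightarrow> nat \<Rightarrow> nat \<Rightarrow> nat \<Rightarrow> bool" where
  "acc an ad bn bd i sc m n =
    (an * RN i sc 1 m n * RE i sc 0 m n + (ad - an) * RN i sc 0 m n * RE i sc 1 m n \<le> ad * RE i sc 1 m n * RE i sc 0 m n \<and>
     bn * RN i sc 1 m n * RE i sc 0 m n + (bd - bn) * RN i sc 0 m n * RE i sc 1 m n \<le> bd * RE i sc 1 m n * RE i sc 0 m n)"
definition good :: "nat \<Rightarrow> nat \<Rightarrow> nat \<Rightarrow> nat \<Rightarrow> nat \<Rightarrow> nat \<Rightarrow> nat \<Rightarrow> nat \<Rightarrow> bool" where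
  "good an ad bn bd i sc m n = (known i sc m n \<and> acc an ad bn bd i sc m n)"
definition anyg :: "nat \<Rightarrow> nat \<Rightarrow> nat \<Rightarrow> nat \<Rightarrow> nat \<Rightarrow> nat \<Rightarrow> nat \<Rightarrow> bool" where
  "anyg an ad bn bd i sc n = (\<exists>m<Suc n. good an ad bn bd i sc m n)"
definition mstar :: "nat \<Rightarrow> nat \<Rightarrow> nat \<Rightarrow> nat \<Rightarrow> nat \<Rightarrow> nat \<Rightarrow> nat \<Rightarrow> nat" where
  "mstar an ad bn bd i sc n = n - bmu (Suc n) (\<lambda>d. good an ad bn bd i sc (n - d) n)"
definition Anum :: "nat \<Rightarrow> nat \<Rightarrow> nat \<Rightarrow> nat \<Rightarrow> nat \<Rightarrow> nat \<Rightarrow> nat \<Rightarrow> nat \<Rightarrow> nat" where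
  "Anum an ad bn bd i sc xb n = (if anyg an ad bn bd i sc n then RN i sc xb (mstar an ad bn bd i sc n) n else 0)"
definition Aden :: "nat \<Rightarrow> nat \<Rightarrow> nat \<Rightarrow> nat \<Rightarrow> nat \<Rightarrow> nat \<Rightarrow> nat \<Rightarrow> nat \<Rightarrow> nat" where
  "Aden an ad bn bd i sc xb n = (if anyg an ad bn bd i sc n then RE i sc xb (mstar an ad bn bd i sc n) n else 1)"
definition QN :: "nat \<Rightarrow> nat \<Rightarrow> nat \<Rightarrow> nat \<Rightarrow> nat \<Rightarrow> nat \<Rightarrow> nat \<Rightarrow> nat" where
  "QN an ad bn bd i sc n = (\<Prod>k<slen sc. Anum an ad bn bd i (stake k sc) (sbit k sc) n)"
definition QE :: "nat \<Rightarrow> nat \<Rightarrow> nat \<Rightarrow> nat \<Rightarrow> nat \<Rightarrow> nat \<Rightarrow> nat \<Rightarrow> nat" where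
  "QE an ad bn bd i sc n = (\<Prod>k<slen sc. Aden an ad bn bd i (stake k sc) (sbit k sc) n)"

lemma rp_DefN0: "rp 3 (\<lambda>xs. DefN (xs ! 0) (xs ! 1) (xs ! 2))"
  unfolding DefN_def by (intro rintro | simp_all only: tk)+
lemmas rp_DefN[rintro] = rp_F3[OF rp_DefN0]

lemma R_firstT0: "R 3 (\<lambda>xs. firstT (xs ! 0) (xs ! 1) (xs ! 2))"
  unfolding firstT_def by (intro rintro | simp_all only: tk)+
lemmas R_firstT[rintro] = R_F3[OF R_firstT0]

lemma R_valN0: "R 3 (\<lambda>xs. valN (xs ! 0) (xs ! 1) (xs ! 2))"
  unfolding valN_def by (intro rintro | simp_all only: tk)+
lemmas R_valN[rintro] = R_F3[OF R_valN0]

lemma R_args[rintro]: "R k f \<Longrightarrow> R k g \<Longrightarrow> R k h \<Longrightarrow> R k (\<lambda>xs. args (f xs) (g xs) (h xs))"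
  unfolding args_def by (intro rintro)
lemma R_cu[rintro]: "R k f \<Longrightarrow> R k (\<lambda>xs. cu (f xs))" unfolding cu_def by (intro rintro)
lemma R_cv[rintro]: "R k f \<Longrightarrow> R k (\<lambda>xs. cv (f xs))" unfolding cv_def by (intro rintro)
lemma R_cw[rintro]: "R k f \<Longrightarrow> R k (\<lambda>xs. cw (f xs))" unfolding cw_def by (intro rintro)

lemma rp_kn0: "rp 4 (\<lambda>xs. kn (xs ! 0) (xs ! 1) (xs ! 2) (xs ! 3))"
  unfolding kn_def by (intro rintro | simp_all only: tk)+
lemmas rp_kn[rintro] = rp_F4[OF rp_kn0]

lemma R_NN0: "R 5 (\<lambda>xs. NN (xs ! 0) (xs ! 1) (xs ! 2) (xs ! 3) (xs ! 4))"
  unfolding NN_def by (intro rintro | simp_all only: tk)+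
lemmas R_NN[rintro] = R_F5[OF R_NN0]

lemma R_EE0: "R 5 (\<lambda>xs. EE (xs ! 0) (xs ! 1) (xs ! 2) (xs ! 3) (xs ! 4))"
  unfolding EE_def by (intro rintro | simp_all only: tk)+
lemmas R_EE[rintro] = R_F5[OF R_EE0]

lemma rp_known0: "rp 4 (\<lambda>xs. known (xs ! 0) (xs ! 1) (xs ! 2) (xs ! 3))"
  unfolding known_def by (intro rintro | simp_all only: tk)+
lemmas rp_known[rintro] = rp_F4[OF rp_known0]

lemma R_amax0: "R 5 (\<lambda>xs. amax (xs ! 0) (xs ! 1) (xs ! 2) (xs ! 3) (xs ! 4))"
  unfolding amax_def by (intro rintro | simp_all only: tk)+
lemmas R_amax[rintro] = R_F5[OF R_amax0]

lemma R_RN0: "R 5 (\<lambda>xs. RN (xs ! 0) (xs ! 1) (xs ! 2) (xs ! 3) (xs ! 4))"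
  unfolding RN_def by (intro rintro | simp_all only: tk)+
lemmas R_RN[rintro] = R_F5[OF R_RN0]

lemma R_RE0: "R 5 (\<lambda>xs. RE (xs ! 0) (xs ! 1) (xs ! 2) (xs ! 3) (xs ! 4))"
  unfolding RE_def by (intro rintro | simp_all only: tk)+
lemmas R_RE[rintro] = R_F5[OF R_RE0]

lemma rp_acc0: "rp 4 (\<lambda>xs. acc an ad bn bd (xs ! 0) (xs ! 1) (xs ! 2) (xs ! 3))"
  unfolding acc_def by (intro rintro | simp_all only: tk)+
lemmas rp_acc[rintro] = rp_F4[OF rp_acc0]

lemma rp_good0: "rp 4 (\<lambda>xs. good an ad bn bd (xs ! 0) (xs ! 1) (xs ! 2) (xs ! 3))"
  unfolding good_def by (intro rintro | simp_all only: tk)+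
lemmas rp_good[rintro] = rp_F4[OF rp_good0]

lemma rp_anyg0: "rp 3 (\<lambda>xs. anyg an ad bn bd (xs ! 0) (xs ! 1) (xs ! 2))"
  unfolding anyg_def by (intro rintro | simp_all only: tk)+
lemmas rp_anyg[rintro] = rp_F3[OF rp_anyg0]

lemma R_mstar0: "R 3 (\<lambda>xs. mstar an ad bn bd (xs ! 0) (xs ! 1) (xs ! 2))"
  unfolding mstar_def by (intro rintro | simp_all only: tk)+
lemmas R_mstar[rintro] = R_F3[OF R_mstar0]

lemma R_Anum0: "R 4 (\<lambda>xs. Anum an ad bn bd (xs ! 0) (xs ! 1) (xs ! 2) (xs ! 3))"
  unfolding Anum_def by (intro rintro | simp_all only: tk)+
lemmas R_Anum[rintro] = R_F4[OF R_Anum0]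

lemma R_Aden0: "R 4 (\<lambda>xs. Aden an ad bn bd (xs ! 0) (xs ! 1) (xs ! 2) (xs ! 3))"
  unfolding Aden_def by (intro rintro | simp_all only: tk)+
lemmas R_Aden[rintro] = R_F4[OF R_Aden0]

lemma R_QN0: "R 3 (\<lambda>xs. QN an ad bn bd (xs ! 0) (xs ! 1) (xs ! 2))"
  unfolding QN_def by (intro rintro | simp_all only: tk)+

lemma R_QE0: "R 3 (\<lambda>xs. QE an ad bn bd (xs ! 0) (xs ! 1) (xs ! 2))"
  unfolding QE_def by (intro rintro | simp_all only: tk)+


lemma bmu_Least: "\<exists>j<n. P j \<Longrightarrow> bmu n P = (LEAST j. P j)"
  by (simp add: bmu_def)

lemma bmu_cong: assumes "\<And>j. j < n \<Longrightarrow> P j = Q j" shows "bmu n P = bmu n Q"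
proof (cases "\<exists>j<n. P j")
  case True
  then have T2: "\<exists>j<n. Q j" using assms by blast
  have "bmu n P < n" "P (bmu n P)" "\<And>j. j < bmu n P \<Longrightarrow> \<not> P j" using bmu_props[OF True] by auto
  moreover have "bmu n Q < n" "Q (bmu n Q)" "\<And>j. j < bmu n Q \<Longrightarrow> \<not> Q j" using bmu_props[OF T2] by auto
  ultimately show ?thesis using assms by (metis linorder_neqE_nat order.strict_trans)
next
  case False
  then have "\<not> (\<exists>j<n. Q j)" using assms by blast
  then show ?thesis using False by (simp add: bmu_none)
qed

lemma DefN_mono: "DefN c x n \<Longrightarrow> n \<le> n' \<Longrightarrow> DefN c x n'"
  unfolding DefN_def using cert_mono by (meson le_imp_less_Suc less_Suc_eq_le order_trans)

lemma firstT_props: assumes "DefN c x n"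
  shows "firstT c x n \<le> n" "DefN c x (firstT c x n)" "firstT c x n = (LEAST t. DefN c x t)"
proof -
  have ex: "\<exists>t<Suc n. DefN c x t" using assms by blast
  show "firstT c x n \<le> n" using bmu_props(2)[OF ex] unfolding firstT_def by simp
  show "DefN c x (firstT c x n)" using bmu_props(1)[OF ex] unfolding firstT_def by simp
  show "firstT c x n = (LEAST t. DefN c x t)" using bmu_Least[OF ex] unfolding firstT_def by simp
qed

lemma valN_props: assumes "DefN c x n"
  shows "certN c x (valN c x n) (firstT c x n)"
    "valN c x n = (LEAST y. certN c x y (firstT c x n))"
proof -
  have d: "DefN c x (firstT c x n)" and le: "firstT c x n \<le> n" using firstT_props[OF assms] by auto
  from d obtain y where y: "y < Suc (firstT c x n)" "certN c x y (firstT c x n)" unfolding DefN_def by blast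
  have ex: "\<exists>y<Suc n. certN c x y (firstT c x n)" using y le by (intro exI[of _ y]) auto
  show "certN c x (valN c x n) (firstT c x n)" using bmu_props(1)[OF ex] unfolding valN_def by simp
  show "valN c x n = (LEAST y. certN c x y (firstT c x n))" using bmu_Least[OF ex] unfolding valN_def by simp
qed

lemma stable: assumes "DefN c x n" "n \<le> n'"
  shows "firstT c x n' = firstT c x n" "valN c x n' = valN c x n"
proof -
  have d': "DefN c x n'" using DefN_mono assms by blast
  show f: "firstT c x n' = firstT c x n" using firstT_props(3)[OF assms(1)] firstT_props(3)[OF d'] by simp
  show "valN c x n' = valN c x n" using valN_props(2)[OF assms(1)] valN_props(2)[OF d'] f by simp
qed

lemma genuine: assumes "eval p xs v" "DefN (enc p) (list_encode xs) n"
  shows "valN (enc p) (list_encode xs) n = v"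
  using valN_props(1)[OF assms(2)] cert_sound eval_det assms(1) by blast

lemma event_DefN: assumes "eval p xs v" shows "\<exists>N. \<forall>n\<ge>N. DefN (enc p) (list_encode xs) n"
proof -
  obtain t where t: "certN (enc p) (list_encode xs) v t" using cert_complete[OF assms] by blast
  have "DefN (enc p) (list_encode xs) n" if "n \<ge> t + v" for n
    unfolding DefN_def using that cert_mono[OF t, of n] by (intro exI[of _ v]) auto
  then show ?thesis by blast
qed


definition fr :: "nat \<Rightarrow> nat \<Rightarrow> nat \<Rightarrow> nat \<Rightarrow> nat \<Rightarrow> real" where
  "fr i sc xb j n = real (NN i sc xb j n) / real (EE i sc xb j n)"

definition Rv :: "nat \<Rightarrow> nat \<Rightarrow> nat \<Rightarrow> nat \<Rightarrow> nat \<Rightarrow> real" where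
  "Rv i sc xb m n = fr i sc xb (amax i sc xb m n) n"

lemma EE_pos: "0 < EE i sc xb j n" by (simp add: EE_def)

lemma fr_nonneg: "0 \<le> fr i sc xb j n" by (simp add: fr_def)

lemma Rv_alt: "Rv i sc xb m n = real (RN i sc xb m n) / real (RE i sc xb m n)"
  by (simp add: Rv_def fr_def RN_def RE_def)

lemma cross_iff:
  fixes a b c d :: nat assumes "0 < b" "0 < d"
  shows "a * d \<le> c * b \<longleftrightarrow> real a / real b \<le> real c / real d"
proof -
  have "real a / real b \<le> real c / real d \<longleftrightarrow> real a * real d \<le> real c * real b"
    using assms by (simp add: field_simps)
  also have "\<dots> \<longleftrightarrow> a * d \<le> c * b" by (metis of_nat_le_iff of_nat_mult)
  finally show ?thesis by simp
qed

lemma exmax: "\<exists>j<Suc m. \<forall>j'<Suc m. (f::nat \<Rightarrow> real) j' \<le> f j"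
proof (induction m)
  case 0 then show ?case by auto
next
  case (Suc m)
  then obtain j where j: "j < Suc m" "\<forall>j'<Suc m. f j' \<le> f j" by blast
  show ?case
  proof (cases "f (Suc m) \<le> f j")
    case True
    then show ?thesis using j by (intro exI[of _ j]) (auto simp: less_Suc_eq)
  next
    case False
    then show ?thesis using j by (intro exI[of _ "Suc m"]) (auto simp: less_Suc_eq)
  qed
qed

lemma amax_props: "amax i sc xb m n \<le> m" "j' \<le> m \<Longrightarrow> fr i sc xb j' n \<le> Rv i sc xb m n"
proof -
  let ?P = "\<lambda>j. \<forall>j'<Suc m. NN i sc xb j' n * EE i sc xb j n \<le> NN i sc xb j n * EE i sc xb j' n"
  have eq: "?P j \<longleftrightarrow> (\<forall>j'<Suc m. fr i sc xb j' n \<le> fr i sc xb j n)" for j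
    unfolding fr_def using cross_iff[OF EE_pos EE_pos] by simp
  obtain j where "j < Suc m" "\<forall>j'<Suc m. fr i sc xb j' n \<le> fr i sc xb j n"
    using exmax[of m "\<lambda>j. fr i sc xb j n"] by blast
  then have ex: "\<exists>j<Suc m. ?P j" using eq by blast
  show "amax i sc xb m n \<le> m" using bmu_props(2)[OF ex] unfolding amax_def by simp
  have "?P (amax i sc xb m n)" using bmu_props(1)[OF ex] unfolding amax_def by simp
  then show "j' \<le> m \<Longrightarrow> fr i sc xb j' n \<le> Rv i sc xb m n" using eq unfolding Rv_def by auto
qed

lemma Rv_nonneg: "0 \<le> Rv i sc xb m n" by (simp add: Rv_def fr_nonneg)

lemma Rv_mono_m: "m \<le> m' \<Longrightarrow> Rv i sc xb m n \<le> Rv i sc xb m' n"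
  using amax_props(2)[of "amax i sc xb m n" m' i sc xb n] amax_props(1)[of i sc xb m n]
  unfolding Rv_def by simp

lemma known_mono: "known i sc m n \<Longrightarrow> n \<le> n' \<Longrightarrow> known i sc m n'"
  unfolding known_def kn_def using DefN_mono by blast

lemma known_down: "known i sc m' n \<Longrightarrow> m \<le> m' \<Longrightarrow> known i sc m n"
  unfolding known_def by auto

lemma NN_EE_stable: assumes "known i sc m n" "n \<le> n'" "j \<le> m" "xb < 2"
  shows "NN i sc xb j n' = NN i sc xb j n" "EE i sc xb j n' = EE i sc xb j n"
proof -
  have "kn i sc j n" using assms(1,3) unfolding known_def by auto
  then have d: "DefN (cu i) (args sc xb j) n" "DefN (cv i) (args sc xb j) n" "DefN (cw i) (args sc xb j) n"
    using assms(4) unfolding kn_def by auto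
  show "NN i sc xb j n' = NN i sc xb j n" unfolding NN_def using stable(2)[OF d(1) assms(2)] stable(2)[OF d(2) assms(2)] by simp
  show "EE i sc xb j n' = EE i sc xb j n" unfolding EE_def using stable(2)[OF d(3) assms(2)] by simp
qed

lemma amax_stable: assumes "known i sc m n" "n \<le> n'" "xb < 2"
  shows "amax i sc xb m n' = amax i sc xb m n"
  unfolding amax_def
proof (rule bmu_cong)
  fix j assume "j < Suc m"
  then have "j \<le> m" by simp
  then show "(\<forall>j'<Suc m. NN i sc xb j' n' * EE i sc xb j n' \<le> NN i sc xb j n' * EE i sc xb j' n') =
        (\<forall>j'<Suc m. NN i sc xb j' n * EE i sc xb j n \<le> NN i sc xb j n * EE i sc xb j' n)"
    using NN_EE_stable[OF assms(1,2) _ assms(3)] by (simp add: less_Suc_eq_le)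
qed

lemma RN_RE_stable: assumes "known i sc m n" "n \<le> n'" "xb < 2"
  shows "RN i sc xb m n' = RN i sc xb m n" "RE i sc xb m n' = RE i sc xb m n" "Rv i sc xb m n' = Rv i sc xb m n"
proof -
  have a: "amax i sc xb m n' = amax i sc xb m n" by (rule amax_stable[OF assms])
  have le: "amax i sc xb m n \<le> m" by (rule amax_props(1))
  show "RN i sc xb m n' = RN i sc xb m n" unfolding RN_def a using NN_EE_stable[OF assms(1,2) le assms(3)] by simp
  show "RE i sc xb m n' = RE i sc xb m n" unfolding RE_def a using NN_EE_stable[OF assms(1,2) le assms(3)] by simp
  show "Rv i sc xb m n' = Rv i sc xb m n" unfolding Rv_def fr_def a using NN_EE_stable[OF assms(1,2) le assms(3)] by simp
qed

lemma acc_stable: "known i sc m n \<Longrightarrow> n \<le> n' \<Longrightarrow> acc an ad bn bd i sc m n' = acc an ad bn bd i sc m n"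
  unfolding acc_def using RN_RE_stable[of i sc m n n' 0] RN_RE_stable[of i sc m n n' 1] by simp

lemma good_stable: "good an ad bn bd i sc m n \<Longrightarrow> n \<le> n' \<Longrightarrow> good an ad bn bd i sc m n'"
  unfolding good_def using acc_stable known_mono by blast

lemma lin_iff:
  fixes an ad n1 e1 n0 e0 :: nat
  assumes "0 < ad" "an \<le> ad" "0 < e1" "0 < e0"
  shows "an * n1 * e0 + (ad - an) * n0 * e1 \<le> ad * e1 * e0 \<longleftrightarrow>
    (real an / real ad) * (real n1 / real e1) + (1 - real an / real ad) * (real n0 / real e0) \<le> 1"
proof -
  have "an * n1 * e0 + (ad - an) * n0 * e1 \<le> ad * e1 * e0 \<longleftrightarrow>
     real an * real n1 * real e0 + (real ad - real an) * real n0 * real e1 \<le> real ad * real e1 * real e0"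
    using assms(2) by (simp flip: of_nat_mult of_nat_add of_nat_diff add: of_nat_le_iff)
  also have "(real an / real ad) * (real n1 / real e1) + (1 - real an / real ad) * (real n0 / real e0) =
     (real an * real n1 * real e0 + (real ad - real an) * real n0 * real e1) / (real ad * real e1 * real e0)"
    using assms by (simp add: field_simps)
  moreover have "0 < real ad * real e1 * real e0" using assms by simp
  ultimately show ?thesis by (simp add: pos_divide_le_eq)
qed

lemma lin_bound:
  fixes a b p f1 f0 :: real
  assumes "a \<le> p" "p \<le> b" "a * f1 + (1 - a) * f0 \<le> 1" "b * f1 + (1 - b) * f0 \<le> 1"
  shows "p * f1 + (1 - p) * f0 \<le> 1"
proof (cases "f0 \<le> f1")
  case True
  have "p * f1 + (1 - p) * f0 = f0 + p * (f1 - f0)" by algebra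
  also have "\<dots> \<le> f0 + b * (f1 - f0)" using True assms(2) by (simp add: mult_right_mono)
  also have "\<dots> = b * f1 + (1 - b) * f0" by algebra
  finally show ?thesis using assms(4) by simp
next
  case False
  have "p * f1 + (1 - p) * f0 = f0 + p * (f1 - f0)" by algebra
  also have "\<dots> \<le> f0 + a * (f1 - f0)" using False assms(1) by (simp add: mult_right_mono_neg)
  also have "\<dots> = a * f1 + (1 - a) * f0" by algebra
  finally show ?thesis using assms(3) by simp
qed


definition Ar :: "nat \<Rightarrow> nat \<Rightarrow> nat \<Rightarrow> nat \<Rightarrow> nat \<Rightarrow> nat \<Rightarrow> nat \<Rightarrow> nat \<Rightarrow> real" where
  "Ar an ad bn bd i sc xb n = real (Anum an ad bn bd i sc xb n) / real (Aden an ad bn bd i sc xb n)"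

lemma Aden_pos: "0 < Aden an ad bn bd i sc xb n"
  by (simp add: Aden_def RE_def EE_pos)

lemma Ar_eq: "Ar an ad bn bd i sc xb n =
  (if anyg an ad bn bd i sc n then Rv i sc xb (mstar an ad bn bd i sc n) n else 0)"
  by (simp add: Ar_def Anum_def Aden_def Rv_alt)

context
  fixes an ad bn bd :: nat
  assumes pa: "0 < an" "an < ad" and pb: "0 < bn" "bn < bd"
begin

lemma acc_real: "acc an ad bn bd i sc m n \<longleftrightarrow>
  (real an / real ad * Rv i sc 1 m n + (1 - real an / real ad) * Rv i sc 0 m n \<le> 1 \<and>
   real bn / real bd * Rv i sc 1 m n + (1 - real bn / real bd) * Rv i sc 0 m n \<le> 1)"
proof -
  have e: "0 < RE i sc 1 m n" "0 < RE i sc 0 m n" by (simp_all add: RE_def EE_pos)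
  show ?thesis unfolding acc_def Rv_alt
    using lin_iff[of ad an "RE i sc 1 m n" "RE i sc 0 m n" "RN i sc 1 m n" "RN i sc 0 m n"]
      lin_iff[of bd bn "RE i sc 1 m n" "RE i sc 0 m n" "RN i sc 1 m n" "RN i sc 0 m n"] pa pb e
    by simp
qed

lemma lin_mono:
  fixes c x1 x0 y1 y0 :: real
  assumes "0 \<le> c" "c \<le> 1" "x1 \<le> y1" "x0 \<le> y0" "c * y1 + (1 - c) * y0 \<le> 1"
  shows "c * x1 + (1 - c) * x0 \<le> 1"
proof -
  have "c * x1 \<le> c * y1" using assms by (simp add: mult_left_mono)
  moreover have "(1 - c) * x0 \<le> (1 - c) * y0" using assms by (simp add: mult_left_mono)
  ultimately show ?thesis using assms(5) by linarith
qed

lemma ra_props: "0 \<le> real an / real ad" "real an / real ad \<le> 1" "0 \<le> real bn / real bd" "real bn / real bd \<le> 1"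
  using pa pb by auto

lemma acc_down: "acc an ad bn bd i sc m' n \<Longrightarrow> m \<le> m' \<Longrightarrow> acc an ad bn bd i sc m n"
  unfolding acc_real using Rv_mono_m[of m m' i sc 1 n] Rv_mono_m[of m m' i sc 0 n] ra_props
  by (meson lin_mono)

lemma good_down: "good an ad bn bd i sc m' n \<Longrightarrow> m \<le> m' \<Longrightarrow> good an ad bn bd i sc m n"
  unfolding good_def using acc_down known_down by blast

lemma mstar_props: assumes "anyg an ad bn bd i sc n"
  shows "good an ad bn bd i sc (mstar an ad bn bd i sc n) n" "mstar an ad bn bd i sc n \<le> n"
    "\<And>m. good an ad bn bd i sc m n \<Longrightarrow> m \<le> n \<Longrightarrow> m \<le> mstar an ad bn bd i sc n"
proof -
  let ?P = "\<lambda>d. good an ad bn bd i sc (n - d) n"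
  obtain m0 where m0: "m0 < Suc n" "good an ad bn bd i sc m0 n" using assms unfolding anyg_def by blast
  have ex: "\<exists>d<Suc n. ?P d" using m0 by (intro exI[of _ "n - m0"]) auto
  note b = bmu_props[OF ex]
  show "good an ad bn bd i sc (mstar an ad bn bd i sc n) n" using b(1) unfolding mstar_def by simp
  show "mstar an ad bn bd i sc n \<le> n" unfolding mstar_def by simp
  fix m assume m: "good an ad bn bd i sc m n" "m \<le> n"
  have "\<not> (n - m < bmu (Suc n) ?P)"
  proof
    assume "n - m < bmu (Suc n) ?P"
    then have "\<not> ?P (n - m)" using b(3) by blast
    then show False using m by simp
  qed
  then show "m \<le> mstar an ad bn bd i sc n" unfolding mstar_def using m(2) by simp
qed

lemma Ar_nonneg: "0 \<le> Ar an ad bn bd i sc xb n"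
  by (simp add: Ar_def)

lemma Ar_mono: assumes "xb < 2" "n \<le> n'" shows "Ar an ad bn bd i sc xb n \<le> Ar an ad bn bd i sc xb n'"
proof (cases "anyg an ad bn bd i sc n")
  case False
  then show ?thesis using Ar_nonneg by (simp add: Ar_eq)
next
  case True
  let ?m = "mstar an ad bn bd i sc n"
  have g: "good an ad bn bd i sc ?m n" "?m \<le> n" using mstar_props[OF True] by auto
  have g': "good an ad bn bd i sc ?m n'" using good_stable[OF g(1) assms(2)] .
  have any': "anyg an ad bn bd i sc n'" unfolding anyg_def using g' g(2) assms(2) by (intro exI[of _ ?m]) auto
  have le: "?m \<le> mstar an ad bn bd i sc n'" using mstar_props(3)[OF any' g'] g(2) assms(2) by simp
  have "Ar an ad bn bd i sc xb n = Rv i sc xb ?m n" using True by (simp add: Ar_eq)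
  also have "\<dots> = Rv i sc xb ?m n'" using RN_RE_stable(3)[OF _ assms(2) assms(1)] g(1) by (simp add: good_def)
  also have "\<dots> \<le> Rv i sc xb (mstar an ad bn bd i sc n') n'" by (rule Rv_mono_m[OF le])
  also have "\<dots> = Ar an ad bn bd i sc xb n'" using any' by (simp add: Ar_eq)
  finally show ?thesis .
qed

lemma Ar_acc: "real an / real ad * Ar an ad bn bd i sc 1 n + (1 - real an / real ad) * Ar an ad bn bd i sc 0 n \<le> 1 \<and>
  real bn / real bd * Ar an ad bn bd i sc 1 n + (1 - real bn / real bd) * Ar an ad bn bd i sc 0 n \<le> 1"
proof (cases "anyg an ad bn bd i sc n")
  case False then show ?thesis by (simp add: Ar_eq)
next
  case True
  have "acc an ad bn bd i sc (mstar an ad bn bd i sc n) n" using mstar_props(1)[OF True] by (simp add: good_def)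
  then show ?thesis using True by (simp add: Ar_eq acc_real)
qed

definition Bnd :: real where "Bnd = real ad / real an + real ad / real (ad - an)"

lemma Ar_bound: assumes "xb < 2" shows "Ar an ad bn bd i sc xb n \<le> Bnd"
proof -
  let ?a = "real an / real ad"
  have a: "0 < ?a" "?a < 1" using pa by auto
  have ac: "?a * Ar an ad bn bd i sc 1 n + (1 - ?a) * Ar an ad bn bd i sc 0 n \<le> 1" using Ar_acc by blast
  have n0: "0 \<le> Ar an ad bn bd i sc 0 n" "0 \<le> Ar an ad bn bd i sc 1 n" using Ar_nonneg by auto
  have b1: "?a * Ar an ad bn bd i sc 1 n \<le> 1" using ac n0 a by (smt (verit) mult_nonneg_nonneg)
  have b0: "(1 - ?a) * Ar an ad bn bd i sc 0 n \<le> 1" using ac n0 a by (smt (verit) mult_nonneg_nonneg)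
  have c1: "Ar an ad bn bd i sc 1 n \<le> real ad / real an"
    using b1 a pa by (simp add: field_simps)
  have "1 - ?a = real (ad - an) / real ad" using pa by (simp add: field_simps of_nat_diff)
  then have c0: "Ar an ad bn bd i sc 0 n \<le> real ad / real (ad - an)"
    using b0 pa by (simp add: field_simps)
  have p1: "0 \<le> real ad / real an" "0 \<le> real ad / real (ad - an)" by auto
  have x: "xb = 0 \<or> xb = 1" using assms by auto
  show ?thesis using c0 c1 p1 x unfolding Bnd_def by (smt (verit))
qed

end


definition Dl :: "nat \<Rightarrow> nat \<Rightarrow> nat \<Rightarrow> nat \<Rightarrow> nat \<Rightarrow> nat \<Rightarrow> nat \<Rightarrow> real" where
  "Dl an ad bn bd i sc xb = (SUP n. Ar an ad bn bd i sc xb n)"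

definition Dm :: "nat \<Rightarrow> nat \<Rightarrow> nat \<Rightarrow> nat \<Rightarrow> nat \<Rightarrow> bool list \<Rightarrow> bool \<Rightarrow> real" where
  "Dm an ad bn bd i s x = Dl an ad bn bd i (str_code s) (of_bool x)"

definition qf :: "nat \<Rightarrow> nat \<Rightarrow> nat \<Rightarrow> nat \<Rightarrow> nat \<Rightarrow> bool list \<Rightarrow> nat \<Rightarrow> rat" where
  "qf an ad bn bd i s n = of_nat (QN an ad bn bd i (str_code s) n) / of_nat (QE an ad bn bd i (str_code s) n)"

definition rf :: "nat \<Rightarrow> nat \<Rightarrow> nat \<Rightarrow> nat \<Rightarrow> nat \<Rightarrow> bool list \<Rightarrow> bool \<Rightarrow> nat \<Rightarrow> rat" where
  "rf an ad bn bd i s x n = of_nat (Anum an ad bn bd i (str_code s) (of_bool x) n) / of_nat (Aden an ad bn bd i (str_code s) (of_bool x) n)"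

lemma rf_real: "real_of_rat (rf an ad bn bd i s x n) = Ar an ad bn bd i (str_code s) (of_bool x) n"
  by (simp add: rf_def Ar_def of_rat_divide)

lemma QN_code: "QN an ad bn bd i (str_code s) n = (\<Prod>k<length s. Anum an ad bn bd i (str_code (take k s)) (of_bool (s ! k)) n)"
  unfolding QN_def by (simp add: slen_code)

lemma QE_code: "QE an ad bn bd i (str_code s) n = (\<Prod>k<length s. Aden an ad bn bd i (str_code (take k s)) (of_bool (s ! k)) n)"
  unfolding QE_def by (simp add: slen_code)

lemma qf_real: "real_of_rat (qf an ad bn bd i s n) = (\<Prod>k<length s. Ar an ad bn bd i (str_code (take k s)) (of_bool (s ! k)) n)"
  unfolding qf_def Ar_def of_rat_divide QN_code QE_code by (simp add: prod_dividef of_rat_prod)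

lemma QE_pos: "0 < QE an ad bn bd i sc n"
  unfolding QE_def using Aden_pos by (simp add: prod_pos)

lemma upper_exp_le:
  fixes a b :: real
  assumes "a \<le> b" "a * f True + (1 - a) * f False \<le> 1" "b * f True + (1 - b) * f False \<le> 1"
  shows "upper_exp {a..b} f \<le> 1"
  unfolding upper_exp_def
proof (rule cSUP_least)
  show "{a..b} \<noteq> {}" using assms(1) by simp
  fix p assume "p \<in> {a..b}"
  then show "p * f True + (1 - p) * f False \<le> 1" using lin_bound[of a p b "f True" "f False"] assms by auto
qed

lemma upper_exp_ge:
  fixes a b p :: real
  assumes "0 \<le> a" "b \<le> 1" "p \<in> {a..b}"
  shows "p * f True + (1 - p) * f False \<le> upper_exp {a..b} f"
  unfolding upper_exp_def
proof (rule cSUP_upper[OF assms(3)])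
  show "bdd_above ((\<lambda>p. p * f True + (1 - p) * f False) ` {a..b})"
  proof (rule bdd_aboveI2)
    fix p assume p: "p \<in> {a..b}"
    then have "0 \<le> p" "p \<le> 1" using assms by auto
    have "p * f True \<le> p * \<bar>f True\<bar>" using \<open>0 \<le> p\<close> by (simp add: mult_left_mono)
    also have "\<dots> \<le> \<bar>f True\<bar>" using \<open>0 \<le> p\<close> \<open>p \<le> 1\<close> by (simp add: mult_left_le_one_le)
    finally have 1: "p * f True \<le> \<bar>f True\<bar>" .
    have "(1 - p) * f False \<le> (1 - p) * \<bar>f False\<bar>" using \<open>p \<le> 1\<close> by (simp add: mult_left_mono)
    also have "\<dots> \<le> \<bar>f False\<bar>" using \<open>0 \<le> p\<close> \<open>p \<le> 1\<close> by (simp add: mult_left_le_one_le)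
    finally have 2: "(1 - p) * f False \<le> \<bar>f False\<bar>" .
    from 1 2 show "p * f True + (1 - p) * f False \<le> \<bar>f True\<bar> + \<bar>f False\<bar>" by simp
  qed
qed

lemma test_from_multiplier:
  fixes a b :: real
  assumes ab: "a \<le> b" "0 \<le> a" "b \<le> 1" and nn: "nonneg_multiplier D"
    and sm: "supermartingale_multiplier {a..b} D"
  shows "test_supermartingale {a..b} (generated D)"
  unfolding test_supermartingale_def
proof (intro conjI allI)
  show "generated D [] = 1" by (simp add: generated_def)
  fix s
  show "0 \<le> generated D s" unfolding generated_def using nn by (auto simp: nonneg_multiplier_def intro: prod_nonneg)
  have gs: "generated D (s @ [x]) = generated D s * D s x" for x
    unfolding generated_def by (simp add: nth_append)
  have T0: "0 \<le> generated D s" unfolding generated_def using nn by (auto simp: nonneg_multiplier_def intro: prod_nonneg)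
  show "upper_exp {a..b} (\<lambda>x. generated D (s @ [x]) - generated D s) \<le> 0"
    unfolding upper_exp_def
  proof (rule cSUP_least)
    show "{a..b} \<noteq> {}" using ab by simp
    fix p assume p: "p \<in> {a..b}"
    have le: "p * D s True + (1 - p) * D s False \<le> 1"
      using upper_exp_ge[OF ab(2,3) p, of "D s"] sm unfolding supermartingale_multiplier_def by (meson order_trans)
    have "p * (generated D (s @ [True]) - generated D s) + (1 - p) * (generated D (s @ [False]) - generated D s)
        = generated D s * (p * D s True + (1 - p) * D s False - 1)"
      unfolding gs by algebra
    also have "\<dots> \<le> 0" using T0 le by (simp add: mult_nonneg_nonpos)
    finally show "p * (generated D (s @ [True]) - generated D s) + (1 - p) * (generated D (s @ [False]) - generated D s) \<le> 0" .
  qed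
qed

context
  fixes an ad bn bd :: nat
  assumes pa: "0 < an" "an < ad" and pb: "0 < bn" "bn < bd"
begin

lemma Ar_lim: assumes "xb < 2"
  shows "(\<lambda>n. Ar an ad bn bd i sc xb n) \<longlonglongrightarrow> Dl an ad bn bd i sc xb"
  unfolding Dl_def
proof (rule LIMSEQ_incseq_SUP)
  show "bdd_above (range (\<lambda>n. Ar an ad bn bd i sc xb n))"
    using Ar_bound[OF pa pb assms] by (intro bdd_aboveI2) blast
  show "incseq (\<lambda>n. Ar an ad bn bd i sc xb n)"
    using Ar_mono[OF pa pb assms] by (simp add: incseq_def)
qed

lemma Dl_nonneg: "xb < 2 \<Longrightarrow> 0 \<le> Dl an ad bn bd i sc xb"
  using LIMSEQ_le_const[OF Ar_lim] Ar_nonneg[OF pa pb] by blast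

lemma Dl_acc: "real an / real ad * Dl an ad bn bd i sc 1 + (1 - real an / real ad) * Dl an ad bn bd i sc 0 \<le> 1 \<and>
  real bn / real bd * Dl an ad bn bd i sc 1 + (1 - real bn / real bd) * Dl an ad bn bd i sc 0 \<le> 1"
proof
  have l1: "(\<lambda>n. Ar an ad bn bd i sc 1 n) \<longlonglongrightarrow> Dl an ad bn bd i sc 1" by (rule Ar_lim) simp
  have l0: "(\<lambda>n. Ar an ad bn bd i sc 0 n) \<longlonglongrightarrow> Dl an ad bn bd i sc 0" by (rule Ar_lim) simp
  show "real an / real ad * Dl an ad bn bd i sc 1 + (1 - real an / real ad) * Dl an ad bn bd i sc 0 \<le> 1"
    by (rule LIMSEQ_le_const2[OF tendsto_add[OF tendsto_mult_left[OF l1] tendsto_mult_left[OF l0]]])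
      (use Ar_acc[OF pa pb] in blast)
  show "real bn / real bd * Dl an ad bn bd i sc 1 + (1 - real bn / real bd) * Dl an ad bn bd i sc 0 \<le> 1"
    by (rule LIMSEQ_le_const2[OF tendsto_add[OF tendsto_mult_left[OF l1] tendsto_mult_left[OF l0]]])
      (use Ar_acc[OF pa pb] in blast)
qed

lemma Dm_nonneg: "nonneg_multiplier (Dm an ad bn bd i)"
  unfolding nonneg_multiplier_def Dm_def using Dl_nonneg by (simp add: of_bool_def)

lemma Dm_super:
  assumes "real an / real ad \<le> real bn / real bd"
  shows "supermartingale_multiplier {real an / real ad..real bn / real bd} (Dm an ad bn bd i)"
  unfolding supermartingale_multiplier_def
proof
  fix s
  show "upper_exp {real an / real ad..real bn / real bd} (Dm an ad bn bd i s) \<le> 1"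
    using Dl_acc[of i "str_code s"] by (intro upper_exp_le[OF assms]) (simp_all add: Dm_def)
qed

lemma rf_mono: "mono (rf an ad bn bd i s x)"
proof (rule monoI)
  fix n n' :: nat assume "n \<le> n'"
  have "real_of_rat (rf an ad bn bd i s x n) \<le> real_of_rat (rf an ad bn bd i s x n')"
    unfolding rf_real by (rule Ar_mono[OF pa pb _ \<open>n \<le> n'\<close>]) simp
  then show "rf an ad bn bd i s x n \<le> rf an ad bn bd i s x n'" by (simp add: of_rat_less_eq)
qed

lemma Dm_lsc: "lower_semicomputable_multiplier (Dm an ad bn bd i)"
  unfolding lower_semicomputable_multiplier_def
proof (intro exI conjI allI)
  let ?g = "\<lambda>xs. of_nat (Anum an ad bn bd i (xs ! 0) (xs ! 1) (xs ! 2)) / of_nat (Aden an ad bn bd i (xs ! 0) (xs ! 1) (xs ! 2)) :: rat"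
  show "recursive_rat 3 ?g"
    unfolding recursive_rat_def
  proof (intro exI conjI allI impI)
    show "R 3 (\<lambda>xs. Anum an ad bn bd i (xs ! 0) (xs ! 1) (xs ! 2))" by (intro rintro R_Anum | simp_all only: tk)+
    show "R 3 (\<lambda>xs. 0)" by (rule R_const)
    show "R 3 (\<lambda>xs. Aden an ad bn bd i (xs ! 0) (xs ! 1) (xs ! 2) - 1)" by (intro rintro R_Aden | simp_all only: tk)+
    fix xs :: "nat list"
    show "?g xs = (of_nat (Anum an ad bn bd i (xs ! 0) (xs ! 1) (xs ! 2)) - of_nat 0) /
       of_nat (Aden an ad bn bd i (xs ! 0) (xs ! 1) (xs ! 2) - 1 + 1)"
      using Aden_pos[of an ad bn bd i "xs ! 0" "xs ! 1" "xs ! 2"] by simp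
  qed
  fix s x n
  show "rf an ad bn bd i s x n = ?g [str_code s, of_bool x, n]" by (simp add: rf_def)
next
  fix s x
  show "mono (rf an ad bn bd i s x)" by (rule rf_mono)
next
  fix s x
  show "(\<lambda>n. real_of_rat (rf an ad bn bd i s x n)) \<longlonglongrightarrow> Dm an ad bn bd i s x"
    unfolding rf_real Dm_def by (rule Ar_lim) simp
qed

lemma qf_lim: "(\<lambda>n. real_of_rat (qf an ad bn bd i s n)) \<longlonglongrightarrow> generated (Dm an ad bn bd i) s"
  unfolding qf_real generated_def Dm_def
  by (rule tendsto_prod) (rule Ar_lim, simp)

lemma qf_mono: "mono (qf an ad bn bd i s)"
proof (rule monoI)
  fix n n' :: nat assume nn: "n \<le> n'"
  have "real_of_rat (qf an ad bn bd i s n) \<le> real_of_rat (qf an ad bn bd i s n')"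
    unfolding qf_real
    by (rule prod_mono) (use Ar_nonneg[OF pa pb] Ar_mono[OF pa pb _ nn] in auto)
  then show "qf an ad bn bd i s n \<le> qf an ad bn bd i s n'" by (simp add: of_rat_less_eq)
qed

end

lemma qf_rec: "\<exists>g. recursive_rat 3 g \<and> (\<forall>i s n. qf an ad bn bd i s n = g [i, str_code s, n])"
proof (intro exI conjI allI)
  let ?g = "\<lambda>xs. of_nat (QN an ad bn bd (xs ! 0) (xs ! 1) (xs ! 2)) / of_nat (QE an ad bn bd (xs ! 0) (xs ! 1) (xs ! 2)) :: rat"
  show "recursive_rat 3 ?g"
    unfolding recursive_rat_def
  proof (intro exI conjI allI impI)
    show "R 3 (\<lambda>xs. QN an ad bn bd (xs ! 0) (xs ! 1) (xs ! 2))" by (rule R_QN0)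
    show "R 3 (\<lambda>xs. 0)" by (rule R_const)
    show "R 3 (\<lambda>xs. QE an ad bn bd (xs ! 0) (xs ! 1) (xs ! 2) - 1)" by (intro R_sub R_QE0 R_const)
    fix xs :: "nat list"
    show "?g xs = (of_nat (QN an ad bn bd (xs ! 0) (xs ! 1) (xs ! 2)) - of_nat 0) /
       of_nat (QE an ad bn bd (xs ! 0) (xs ! 1) (xs ! 2) - 1 + 1)"
      using QE_pos[of an ad bn bd "xs ! 0" "xs ! 1" "xs ! 2"] by simp
  qed
  fix i s n
  show "qf an ad bn bd i s n = ?g [i, str_code s, n]" by (simp add: qf_def)
qed


lemma frac_max: fixes u v w :: nat
  shows "real (u - v) / real (Suc w) = max 0 (real_of_rat ((of_nat u - of_nat v) / of_nat (w + 1)))"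
proof (cases "v \<le> u")
  case True
  then show ?thesis by (simp add: of_rat_divide of_nat_diff of_rat_diff of_rat_add)
next
  case False
  then have "(real u - real v) / (real w + 1) \<le> 0" by (simp add: divide_nonpos_pos)
  then show ?thesis using False by (simp add: of_rat_divide max_def of_rat_diff of_rat_add add.commute)
qed

lemma args_enc: "args sc xb j = list_encode [sc, xb, j]"
  by (simp add: args_def)

lemma ev_finite_all: "(\<And>j. j < (m::nat) \<Longrightarrow> eventually (P j) F) \<Longrightarrow> eventually (\<lambda>n. \<forall>j<m. P j n) F"
proof (induction m)
  case 0 then show ?case by simp
next
  case (Suc m)
  have "eventually (\<lambda>n. (\<forall>j<m. P j n) \<and> P m n) F"
    using Suc by (intro eventually_conj) auto
  then show ?case by (rule eventually_mono) (auto simp: less_Suc_eq)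
qed

context
  fixes an ad bn bd :: nat
  assumes pa: "0 < an" "an < ad" and pb: "0 < bn" "bn < bd"
    and ab: "real an / real ad \<le> real bn / real bd"
begin

lemma cover:
  assumes lsc: "lower_semicomputable_multiplier D" and nn: "nonneg_multiplier D"
    and sm: "supermartingale_multiplier {real an / real ad..real bn / real bd} D"
  shows "\<exists>i. \<forall>s. (\<lambda>n. real_of_rat (qf an ad bn bd i s n)) \<longlonglongrightarrow> generated D s"
proof -
  obtain r g where g: "recursive_rat 3 g" "\<And>s x n. r s x n = g [str_code s, of_bool x, n]"
    and rm: "\<And>s x. mono (r s x)" and rl: "\<And>s x. (\<lambda>n. real_of_rat (r s x n)) \<longlonglongrightarrow> D s x"
    using lsc unfolding lower_semicomputable_multiplier_def by blast
  obtain u v w where uvw: "R 3 u" "R 3 v" "R 3 w"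
    "\<And>xs. length xs = 3 \<Longrightarrow> g xs = (of_nat (u xs) - of_nat (v xs)) / of_nat (w xs + 1)"
    using g(1) unfolding recursive_rat_def by blast
  obtain Pu where Pu: "\<And>xs. length xs = 3 \<Longrightarrow> eval Pu xs (u xs)" using uvw(1) unfolding recursive_nat_def by blast
  obtain Pv where Pv: "\<And>xs. length xs = 3 \<Longrightarrow> eval Pv xs (v xs)" using uvw(2) unfolding recursive_nat_def by blast
  obtain Pw where Pw: "\<And>xs. length xs = 3 \<Longrightarrow> eval Pw xs (w xs)" using uvw(3) unfolding recursive_nat_def by blast
  define i0 where "i0 = prod_encode (enc Pu, prod_encode (enc Pv, enc Pw))"
  have ci: "cu i0 = enc Pu" "cv i0 = enc Pv" "cw i0 = enc Pw"
    by (simp_all add: i0_def cu_def cv_def cw_def)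
  let ?ra = "real an / real ad" and ?rb = "real bn / real bd"
  have ra: "0 \<le> ?ra" "?rb \<le> 1" using pa pb by auto
  have key: "(\<lambda>n. Ar an ad bn bd i0 (str_code s) (of_bool x) n) \<longlonglongrightarrow> D s x" for s x
  proof -
    define sc where "sc = str_code s"
    define F where "F = (\<lambda>x j. max 0 (real_of_rat (r s x j)))"
    have fr_eq: "fr i0 sc (of_bool x') j n = F x' j" if "kn i0 sc j n" for x' j n
    proof -
      have xb: "(of_bool x' :: nat) < 2" by simp
      have d: "DefN (enc Pu) (list_encode [sc, of_bool x', j]) n" "DefN (enc Pv) (list_encode [sc, of_bool x', j]) n"
        "DefN (enc Pw) (list_encode [sc, of_bool x', j]) n"
        using that xb unfolding kn_def ci args_enc by blast+
      have "valN (enc Pu) (list_encode [sc, of_bool x', j]) n = u [sc, of_bool x', j]"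
        by (rule genuine[OF Pu d(1)]) simp
      moreover have "valN (enc Pv) (list_encode [sc, of_bool x', j]) n = v [sc, of_bool x', j]"
        by (rule genuine[OF Pv d(2)]) simp
      moreover have "valN (enc Pw) (list_encode [sc, of_bool x', j]) n = w [sc, of_bool x', j]"
        by (rule genuine[OF Pw d(3)]) simp
      ultimately have fr1: "fr i0 sc (of_bool x') j n = real (u [sc, of_bool x', j] - v [sc, of_bool x', j]) / real (Suc (w [sc, of_bool x', j]))"
        unfolding fr_def NN_def EE_def ci args_enc by simp
      have gx: "g [str_code s, of_bool x', j] = (of_nat (u [str_code s, of_bool x', j]) - of_nat (v [str_code s, of_bool x', j])) / of_nat (w [str_code s, of_bool x', j] + 1)"
        by (rule uvw(4)) simp
      have "real (u [sc, of_bool x', j] - v [sc, of_bool x', j]) / real (Suc (w [sc, of_bool x', j])) = F x' j"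
        unfolding F_def g(2) sc_def gx by (rule frac_max)
      then show ?thesis using fr1 by simp
    qed
    have rinc: "incseq (\<lambda>n. real_of_rat (r s x' n))" for x'
      using rm[of s x'] by (simp add: incseq_def mono_def of_rat_less_eq)
    have Dnn: "0 \<le> D s x'" for x' using nn unfolding nonneg_multiplier_def by blast
    have FD: "F x' j \<le> D s x'" for x' j
      unfolding F_def using incseq_le[OF rinc rl] Dnn by simp
    have Rv_le: "Rv i0 sc (of_bool x') m n \<le> D s x'" if "known i0 sc m n" for x' m n
    proof -
      have "kn i0 sc (amax i0 sc (of_bool x') m n) n"
        using that amax_props(1)[of i0 sc "of_bool x'" m n] unfolding known_def by auto
      then show ?thesis unfolding Rv_def using fr_eq FD by simp
    qed
    have Rv_ge: "F x' j \<le> Rv i0 sc (of_bool x') m n" if "known i0 sc m n" "j \<le> m" for x' j m n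
    proof -
      have "kn i0 sc j n" using that unfolding known_def by auto
      then show ?thesis using amax_props(2)[OF that(2), of i0 sc "of_bool x'" n] fr_eq by simp
    qed
    have good_iff: "good an ad bn bd i0 sc m n" if "known i0 sc m n" for m n
    proof -
      have le1: "?ra * D s True + (1 - ?ra) * D s False \<le> 1"
        using upper_exp_ge[OF ra, of ?ra "D s"] ab sm unfolding supermartingale_multiplier_def
        by (meson atLeastAtMost_iff order_refl order_trans)
      have le2: "?rb * D s True + (1 - ?rb) * D s False \<le> 1"
        using upper_exp_ge[OF ra, of ?rb "D s"] ab sm unfolding supermartingale_multiplier_def
        by (meson atLeastAtMost_iff order_refl order_trans)
      have r1: "Rv i0 sc 1 m n \<le> D s True" using Rv_le[OF that, of True] by simp
      have r0: "Rv i0 sc 0 m n \<le> D s False" using Rv_le[OF that, of False] by simp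
      have "acc an ad bn bd i0 sc m n"
        unfolding acc_real[OF pa pb]
        using lin_mono[OF pa pb _ _ r1 r0 le1] lin_mono[OF pa pb _ _ r1 r0 le2] ra_props[OF pa pb] by blast
      then show ?thesis using that by (simp add: good_def)
    qed
    have Ar_le: "Ar an ad bn bd i0 sc (of_bool x) n \<le> D s x" for n
    proof (cases "anyg an ad bn bd i0 sc n")
      case True
      have "known i0 sc (mstar an ad bn bd i0 sc n) n"
        using mstar_props(1)[OF pa pb True] by (simp add: good_def)
      then show ?thesis using True Rv_le by (simp add: Ar_eq)
    next
      case False then show ?thesis using Dnn by (simp add: Ar_eq)
    qed
    have ev_known: "eventually (\<lambda>n. known i0 sc m n) sequentially" for m
    proof -
      have ev1: "eventually (\<lambda>n. DefN (enc P) (list_encode xs) n) sequentially" if "eval P xs y" for P xs y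
        using event_DefN[OF that] by (simp add: eventually_sequentially)
      have "eventually (\<lambda>n. \<forall>j<Suc m. \<forall>xb<2. DefN (cu i0) (args sc xb j) n \<and> DefN (cv i0) (args sc xb j) n \<and> DefN (cw i0) (args sc xb j) n) sequentially"
        unfolding ci args_enc
        by (intro ev_finite_all eventually_conj ev1[OF Pu] ev1[OF Pv] ev1[OF Pw]) simp_all
      then show ?thesis unfolding known_def kn_def .
    qed
    have ev_ge: "eventually (\<lambda>n. F x m \<le> Ar an ad bn bd i0 sc (of_bool x) n) sequentially" for m
    proof -
      have "eventually (\<lambda>n. known i0 sc m n \<and> m \<le> n) sequentially"
        using ev_known[of m] eventually_ge_at_top[of m] by (rule eventually_conj)
      then show ?thesis
      proof (rule eventually_mono)
        fix n assume n: "known i0 sc m n \<and> m \<le> n"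
        have gm: "good an ad bn bd i0 sc m n" using good_iff n by blast
        then have any: "anyg an ad bn bd i0 sc n" unfolding anyg_def using n by (intro exI[of _ m]) auto
        have le: "m \<le> mstar an ad bn bd i0 sc n" using mstar_props(3)[OF pa pb any gm] n by simp
        have "known i0 sc (mstar an ad bn bd i0 sc n) n" using mstar_props(1)[OF pa pb any] by (simp add: good_def)
        then have "F x m \<le> Rv i0 sc (of_bool x) (mstar an ad bn bd i0 sc n) n" using Rv_ge le by blast
        then show "F x m \<le> Ar an ad bn bd i0 sc (of_bool x) n" using any by (simp add: Ar_eq)
      qed
    qed
    have lim: "(\<lambda>n. Ar an ad bn bd i0 sc (of_bool x) n) \<longlonglongrightarrow> Dl an ad bn bd i0 sc (of_bool x)"
      by (rule Ar_lim[OF pa pb]) simp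
    have up: "Dl an ad bn bd i0 sc (of_bool x) \<le> D s x"
      using LIMSEQ_le_const2[OF lim] Ar_le by blast
    have lo: "F x m \<le> Dl an ad bn bd i0 sc (of_bool x)" for m
      using tendsto_lowerbound[OF lim ev_ge] by simp
    have Flim: "F x \<longlonglongrightarrow> D s x"
      unfolding F_def using tendsto_max[OF tendsto_const rl[of s x], of 0] Dnn[of x] by simp
    have "D s x \<le> Dl an ad bn bd i0 sc (of_bool x)"
      using LIMSEQ_le_const2[OF Flim] lo by blast
    then have "Dl an ad bn bd i0 sc (of_bool x) = D s x" using up by simp
    then show ?thesis using lim unfolding sc_def by simp
  qed
  have "(\<lambda>n. real_of_rat (qf an ad bn bd i0 s n)) \<longlonglongrightarrow> generated D s" for s
    unfolding qf_real generated_def by (rule tendsto_prod) (rule key)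
  then show ?thesis by blast
qed

end


lemma rat_frac:
  fixes a :: rat assumes "0 < a" "a < 1"
  shows "\<exists>an ad. 0 < an \<and> an < ad \<and> real_of_rat a = real an / real ad"
proof -
  obtain p q where pq: "quotient_of a = (p, q)" by (cases "quotient_of a")
  have q: "0 < q" using quotient_of_denom_pos[OF pq] .
  have a: "a = of_int p / of_int q" using quotient_of_div[OF pq] .
  have "0 < (of_int p :: rat)" using assms(1) q unfolding a by (simp add: zero_less_divide_iff)
  then have p: "0 < p" by simp
  have "(of_int p :: rat) < of_int q" using assms(2) q unfolding a by (simp add: divide_less_eq)
  then have pq': "p < q" by simp
  have "real_of_rat a = real_of_int p / real_of_int q" unfolding a by (simp add: of_rat_divide)
  also have "\<dots> = real (nat p) / real (nat q)" using p q by simp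
  finally show ?thesis using p pq' by (intro exI[of _ "nat p"] exI[of _ "nat q"]) auto
qed

theorem corollary5:
  fixes a b :: rat
  assumes "0 < a" and "a \<le> b" and "b < 1"
  shows "\<exists>q :: nat \<Rightarrow> bool list \<Rightarrow> nat \<Rightarrow> rat.
     (\<exists>g. recursive_rat 3 g \<and> (\<forall>i s n. q i s n = g [i, str_code s, n])) \<and>
     (\<forall>i s. mono (q i s)) \<and>
     (\<forall>i. \<exists>D. lower_semicomputable_multiplier D \<and> nonneg_multiplier D \<and>
              supermartingale_multiplier {real_of_rat a..real_of_rat b} D \<and>
              (\<forall>s. (\<lambda>n. real_of_rat (q i s n)) \<longlonglongrightarrow> generated D s) \<and>
              test_supermartingale {real_of_rat a..real_of_rat b} (generated D)) \<and>
     (\<forall>D. lower_semicomputable_multiplier D \<and> nonneg_multiplier D \<and>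
              supermartingale_multiplier {real_of_rat a..real_of_rat b} D \<longrightarrow>
          (\<exists>i. \<forall>s. (\<lambda>n. real_of_rat (q i s n)) \<longlonglongrightarrow> generated D s))"
proof -
  obtain an ad where pa: "0 < an" "an < ad" and ea: "real_of_rat a = real an / real ad"
    using rat_frac[of a] assms by auto
  obtain bn bd where pb: "0 < bn" "bn < bd" and eb: "real_of_rat b = real bn / real bd"
    using rat_frac[of b] assms by auto
  have ab: "real an / real ad \<le> real bn / real bd"
    using assms(2) ea eb by (metis of_rat_less_eq)
  have a0: "0 \<le> real an / real ad" and b1: "real bn / real bd \<le> 1" using pa pb by auto
  show ?thesis unfolding ea eb
  proof (intro exI[of _ "qf an ad bn bd"] conjI allI impI)
    show "\<exists>g. recursive_rat 3 g \<and> (\<forall>i s n. qf an ad bn bd i s n = g [i, str_code s, n])"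
      by (rule qf_rec)
    fix i s show "mono (qf an ad bn bd i s)" by (rule qf_mono[OF pa pb])
  next
    fix i
    show "\<exists>D. lower_semicomputable_multiplier D \<and> nonneg_multiplier D \<and>
              supermartingale_multiplier {real an / real ad..real bn / real bd} D \<and>
              (\<forall>s. (\<lambda>n. real_of_rat (qf an ad bn bd i s n)) \<longlonglongrightarrow> generated D s) \<and>
              test_supermartingale {real an / real ad..real bn / real bd} (generated D)"
    proof (intro exI[of _ "Dm an ad bn bd i"] conjI allI)
      show "lower_semicomputable_multiplier (Dm an ad bn bd i)" by (rule Dm_lsc[OF pa pb])
      show nn: "nonneg_multiplier (Dm an ad bn bd i)" by (rule Dm_nonneg[OF pa pb])
      show sm: "supermartingale_multiplier {real an / real ad..real bn / real bd} (Dm an ad bn bd i)"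
        by (rule Dm_super[OF pa pb ab])
      fix s show "(\<lambda>n. real_of_rat (qf an ad bn bd i s n)) \<longlonglongrightarrow> generated (Dm an ad bn bd i) s"
        by (rule qf_lim[OF pa pb])
    next
      show "test_supermartingale {real an / real ad..real bn / real bd} (generated (Dm an ad bn bd i))"
        by (rule test_from_multiplier[OF ab a0 b1 Dm_nonneg[OF pa pb] Dm_super[OF pa pb ab]])
    qed
  next
    fix D
    assume "lower_semicomputable_multiplier D \<and> nonneg_multiplier D \<and>
              supermartingale_multiplier {real an / real ad..real bn / real bd} D"
    then show "\<exists>i. \<forall>s. (\<lambda>n. real_of_rat (qf an ad bn bd i s n)) \<longlonglongrightarrow> generated D s"
      using cover[OF pa pb ab] by blast
  qed
qed


end
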